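(* Let $(N\cup Z,Z)$ be an EZ-structure on a group $\Gamma$ (so $\Gamma$ acts on $N=(N\cup Z)-Z$), and assume that $N$ is a manifold (with or without boundary). Let $\mathcal N=(N\times I)/\equiv$, where each segment $p\times I$ with $p\in\partial N$ is collapsed to a point (so $\mathcal N=N\times I$ if $\partial N=\emptyset$), with the induced $\Gamma$-action, and let $\rho:\mathcal N\to N\hookrightarrow N\cup Z$ be the $\Gamma$-equivariant map induced by projection to $N$. Topologize $\mathcal N\cup Z$ as the closure of the image of the embedding $\mathcal N\to(\mathcal N\cup\infty)\times(N\cup Z)$, $x\mapsto(x,\rho(x))$, where $\mathcal N\cup\infty$ is the one-point compactification. Then $(\mathcal N\cup Z,Z)$ is an EZ-structure on $\Gamma$.
   Context: A Z-structure on a discrete group $\Gamma$ is a pair $(\bar X,Z)$ of spaces such that: (1) $\bar X$ is a Euclidean retract (a compact metrizable retract of some Euclidean space); (2) $Z$ is a Z-set in $\bar X$, i.e. a closed subset such that for every $\epsilon>0$ there is a map $\bar X\to\bar X-Z$ that is $\epsilon$-close to the identity; (3) $\bar X-Z$ admits a fixed point free, properly discontinuous, cocompact action of $\Gamma$; (4) for every compact $K\subset\bar X-Z$, the translates $\gamma K$, $\gamma\in\Gamma$, form a null sequence in $\bar X$: for every open cover $\mathcal U$ of $\bar X$, all but finitely many translates are contained in a single member of $\mathcal U$. An EZ-structure on $\Gamma$ is a Z-structure $(\bar X,Z)$ such that the $\Gamma$-action on $\bar X-Z$ extends to an action of $\Gamma$ on $\bar X$. *)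

theory Defs
  imports "HOL-Analysis.Analysis"
begin

text \<open>The group \<Gamma> is modelled as a type of class group_add (additive notation,
  not assumed commutative); a discrete group carries no topology.\<close>

definition euclidean_retract :: "'a topology \<Rightarrow> bool" where
  "euclidean_retract X \<longleftrightarrow> compact_space X \<and> metrizable_space X \<and>
     (\<exists>n S. S retract_of_space Euclidean_space n \<and>
            X homeomorphic_space subtopology (Euclidean_space n) S)"

text \<open>Z-set: closed, and for every \<epsilon> > 0 there is a map into the complement
  which is \<epsilon>-close to the identity (with respect to a compatible metric; for the
  compact metrizable spaces in question all compatible metrics give the same notion).\<close>
definition Z_set :: "'a topology \<Rightarrow> 'a set \<Rightarrow> bool" where
  "Z_set X Z \<longleftrightarrow> closedin X Z \<and>
     (\<exists>m. mtopology_of m = X \<and>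
        (\<forall>\<epsilon>>0. \<exists>f. continuous_map X X f \<and>
              (\<forall>x\<in>topspace X. f x \<notin> Z \<and> mdist m (f x) x < \<epsilon>)))"

definition top_action :: "('g::group_add \<Rightarrow> 'a \<Rightarrow> 'a) \<Rightarrow> 'a topology \<Rightarrow> bool" where
  "top_action \<phi> Y \<longleftrightarrow>
     (\<forall>g. homeomorphic_map Y Y (\<phi> g)) \<and>
     (\<forall>x\<in>topspace Y. \<phi> 0 x = x) \<and>
     (\<forall>g h. \<forall>x\<in>topspace Y. \<phi> (g + h) x = \<phi> g (\<phi> h x))"

definition fixed_point_free_action :: "('g::group_add \<Rightarrow> 'a \<Rightarrow> 'a) \<Rightarrow> 'a topology \<Rightarrow> bool" where
  "fixed_point_free_action \<phi> Y \<longleftrightarrow> (\<forall>g. \<forall>x\<in>topspace Y. \<phi> g x = x \<longrightarrow> g = 0)"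

definition properly_discontinuous_action :: "('g::group_add \<Rightarrow> 'a \<Rightarrow> 'a) \<Rightarrow> 'a topology \<Rightarrow> bool" where
  "properly_discontinuous_action \<phi> Y \<longleftrightarrow>
     (\<forall>K. compactin Y K \<longrightarrow> finite {g. \<phi> g ` K \<inter> K \<noteq> {}})"

definition cocompact_action :: "('g::group_add \<Rightarrow> 'a \<Rightarrow> 'a) \<Rightarrow> 'a topology \<Rightarrow> bool" where
  "cocompact_action \<phi> Y \<longleftrightarrow> (\<exists>K. compactin Y K \<and> (\<Union>g. \<phi> g ` K) = topspace Y)"

text \<open>Null condition: translates of compacta of X - Z form a null sequence in X.\<close>
definition null_translates :: "('g::group_add \<Rightarrow> 'a \<Rightarrow> 'a) \<Rightarrow> 'a topology \<Rightarrow> 'a set \<Rightarrow> bool" where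
  "null_translates \<phi> X Z \<longleftrightarrow>
     (\<forall>K. compactin (subtopology X (topspace X - Z)) K \<longrightarrow>
        (\<forall>\<U>. (\<forall>U\<in>\<U>. openin X U) \<and> topspace X \<subseteq> \<Union>\<U> \<longrightarrow>
              finite {g. \<not> (\<exists>U\<in>\<U>. \<phi> g ` K \<subseteq> U)}))"

definition Z_structure_via :: "('g::group_add \<Rightarrow> 'a \<Rightarrow> 'a) \<Rightarrow> 'a topology \<Rightarrow> 'a set \<Rightarrow> bool" where
  "Z_structure_via \<phi> X Z \<longleftrightarrow>
     euclidean_retract X \<and> Z_set X Z \<and>
     top_action \<phi> (subtopology X (topspace X - Z)) \<and>
     fixed_point_free_action \<phi> (subtopology X (topspace X - Z)) \<and>
     properly_discontinuous_action \<phi> (subtopology X (topspace X - Z)) \<and>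
     cocompact_action \<phi> (subtopology X (topspace X - Z)) \<and>
     null_translates \<phi> X Z"

definition EZ_structure_via :: "('g::group_add \<Rightarrow> 'a \<Rightarrow> 'a) \<Rightarrow> 'a topology \<Rightarrow> 'a set \<Rightarrow> bool" where
  "EZ_structure_via \<phi> X Z \<longleftrightarrow> Z_structure_via \<phi> X Z \<and> top_action \<phi> X"

definition half_space :: "nat \<Rightarrow> (nat \<Rightarrow> real) topology" where
  "half_space n = subtopology (Euclidean_space n) {x. 0 \<le> x 0}"

definition manifold_chart_at ::
    "'a topology \<Rightarrow> nat \<Rightarrow> 'a \<Rightarrow> 'a set \<Rightarrow> (nat \<Rightarrow> real) set \<Rightarrow> ('a \<Rightarrow> nat \<Rightarrow> real) \<Rightarrow> bool" where
  "manifold_chart_at X n x U V h \<longleftrightarrow> openin X U \<and> x \<in> U \<and> openin (half_space n) V \<and>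
      homeomorphic_map (subtopology X U) (subtopology (half_space n) V) h"

definition is_manifold :: "'a topology \<Rightarrow> bool" where
  "is_manifold X \<longleftrightarrow> Hausdorff_space X \<and> second_countable X \<and>
     (\<exists>n. \<forall>x\<in>topspace X. \<exists>U V h. manifold_chart_at X n x U V h)"

definition manifold_boundary :: "'a topology \<Rightarrow> 'a set" where
  "manifold_boundary X = {x \<in> topspace X. \<exists>n U V h. 0 < n \<and> manifold_chart_at X n x U V h \<and> h x 0 = 0}"

definition quotient_top :: "'a topology \<Rightarrow> ('a \<Rightarrow> 'b) \<Rightarrow> 'b topology" where
  "quotient_top X f = topology (\<lambda>U. U \<subseteq> f ` topspace X \<and> openin X {x \<in> topspace X. f x \<in> U})"

definition one_point_compactification :: "'a topology \<Rightarrow> 'a option topology" where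
  "one_point_compactification X = topology (\<lambda>U.
      U \<subseteq> insert None (Some ` topspace X) \<and> openin X {x. Some x \<in> U} \<and>
      (None \<in> U \<longrightarrow> compactin X (topspace X - {x. Some x \<in> U})))"

text \<open>N \<times> I with each segment p \<times> I, p \<in> \<partial>N, collapsed: points are represented by
  (p,t) with t = 0 whenever p \<in> \<partial>N; the topology is the quotient topology.\<close>
definition collapse_map :: "'a topology \<Rightarrow> 'a \<times> real \<Rightarrow> 'a \<times> real" where
  "collapse_map N = (\<lambda>(p,t). (p, if p \<in> manifold_boundary N then 0 else t))"

definition mapping_cyl :: "'a topology \<Rightarrow> ('a \<times> real) topology" where
  "mapping_cyl N = quotient_top (prod_topology N (top_of_set {0..1})) (collapse_map N)"

definition induced_action :: "('g \<Rightarrow> 'a \<Rightarrow> 'a) \<Rightarrow> 'g \<Rightarrow> 'a \<times> real \<Rightarrow> 'a \<times> real" where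
  "induced_action \<phi> g = (\<lambda>(p,t). (\<phi> g p, t))"

definition graph_embedding :: "'a \<times> real \<Rightarrow> ('a \<times> real) option \<times> 'a" where
  "graph_embedding x = (Some x, fst x)"

text \<open>\<N> \<union> Z: closure of the image of x \<mapsto> (x, \<rho> x) in (\<N> \<union> \<infinity>) \<times> (N \<union> Z).\<close>
definition compactified_carrier :: "'a topology \<Rightarrow> 'a set \<Rightarrow> (('a \<times> real) option \<times> 'a) set" where
  "compactified_carrier X Z =
     prod_topology (one_point_compactification (mapping_cyl (subtopology X (topspace X - Z)))) X
       closure_of (graph_embedding ` topspace (mapping_cyl (subtopology X (topspace X - Z))))"

definition compactified_space :: "'a topology \<Rightarrow> 'a set \<Rightarrow> (('a \<times> real) option \<times> 'a) topology" where
  "compactified_space X Z =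
     subtopology (prod_topology (one_point_compactification (mapping_cyl (subtopology X (topspace X - Z)))) X)
       (compactified_carrier X Z)"

end

theory Submission
  imports Defs "HOL-Homology.Invariance_of_Domain"
begin


lemma mdist_self [simp]: "x \<in> mspace m \<Longrightarrow> mdist m x x = 0"
  by simp

lemma openin_quotient_top:
  "openin (quotient_top T f) U \<longleftrightarrow> U \<subseteq> f ` topspace T \<and> openin T {x \<in> topspace T. f x \<in> U}"
proof -
  define P where "P = (\<lambda>U. U \<subseteq> f ` topspace T \<and> openin T {x \<in> topspace T. f x \<in> U})"
  have 1: "P (S \<inter> U)" if "P S" "P U" for S U
  proof -
    have "{x \<in> topspace T. f x \<in> S \<inter> U} = {x \<in> topspace T. f x \<in> S} \<inter> {x \<in> topspace T. f x \<in> U}" by auto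
    then show ?thesis using that unfolding P_def by auto
  qed
  have 2: "P (\<Union>K)" if K: "\<forall>U\<in>K. P U" for K
  proof -
    have "{x \<in> topspace T. f x \<in> \<Union>K} = \<Union>((\<lambda>U. {x \<in> topspace T. f x \<in> U}) ` K)" by auto
    moreover have "openin T (\<Union>((\<lambda>U. {x \<in> topspace T. f x \<in> U}) ` K))"
      using K unfolding P_def by (intro openin_Union) auto
    ultimately show ?thesis using K unfolding P_def by auto
  qed
  have "istopology P" unfolding istopology_def using 1 2 by blast
  then show ?thesis unfolding quotient_top_def P_def by simp
qed

lemma topspace_quotient_top: "topspace (quotient_top T f) = f ` topspace T"
proof -
  have e: "{x \<in> topspace T. f x \<in> f ` topspace T} = topspace T" by auto
  have "openin (quotient_top T f) (f ` topspace T)"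
    by (simp add: openin_quotient_top e)
  then have "f ` topspace T \<subseteq> topspace (quotient_top T f)" by (rule openin_subset)
  moreover have "topspace (quotient_top T f) \<subseteq> f ` topspace T"
    using openin_quotient_top[of T f "topspace (quotient_top T f)"] by simp
  ultimately show ?thesis by blast
qed

lemma continuous_map_quotient_top: "continuous_map T (quotient_top T f) f"
  unfolding continuous_map_def
  by (auto simp: topspace_quotient_top openin_quotient_top)

lemma continuous_map_from_quotient_top:
  assumes "continuous_map T W (k \<circ> f)"
  shows "continuous_map (quotient_top T f) W k"
  unfolding continuous_map_def
proof (intro conjI allI impI)
  show "k \<in> topspace (quotient_top T f) \<rightarrow> topspace W"
    using assms by (auto simp: topspace_quotient_top continuous_map_def)
  fix V assume V: "openin W V"
  have "{x \<in> topspace T. f x \<in> {c \<in> topspace (quotient_top T f). k c \<in> V}} = {x \<in> topspace T. (k \<circ> f) x \<in> V}"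
    by (auto simp: topspace_quotient_top)
  then show "openin (quotient_top T f) {c \<in> topspace (quotient_top T f). k c \<in> V}"
    using assms V by (simp add: openin_quotient_top continuous_map_def topspace_quotient_top)
qed

lemma closedin_quotient_top:
  assumes "K \<subseteq> f ` topspace T" "closedin T {x \<in> topspace T. f x \<in> K}"
  shows "closedin (quotient_top T f) K"
proof -
  have "{x \<in> topspace T. f x \<in> f ` topspace T - K} = topspace T - {x \<in> topspace T. f x \<in> K}" by auto
  then show ?thesis using assms
    by (simp add: closedin_def openin_quotient_top topspace_quotient_top)
qed

lemma openin_opc:
  "openin (one_point_compactification T) U \<longleftrightarrow>
     U \<subseteq> insert None (Some ` topspace T) \<and> openin T {x. Some x \<in> U} \<and>
      (None \<in> U \<longrightarrow> compactin T (topspace T - {x. Some x \<in> U}))"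
proof -
  define P where "P = (\<lambda>U. U \<subseteq> insert None (Some ` topspace T) \<and> openin T {x. Some x \<in> U} \<and>
      (None \<in> U \<longrightarrow> compactin T (topspace T - {x. Some x \<in> U})))"
  have 1: "P (S \<inter> U)" if S: "P S" and U: "P U" for S U
  proof -
    have e1: "{x. Some x \<in> S \<inter> U} = {x. Some x \<in> S} \<inter> {x. Some x \<in> U}" by auto
    have e2: "topspace T - {x. Some x \<in> S \<inter> U} = (topspace T - {x. Some x \<in> S}) \<union> (topspace T - {x. Some x \<in> U})" by auto
    have o: "openin T {x. Some x \<in> S \<inter> U}" unfolding e1 using S U unfolding P_def by (intro openin_Int) auto
    have c: "compactin T (topspace T - {x. Some x \<in> S \<inter> U})" if "None \<in> S \<inter> U"
      unfolding e2 using S U that unfolding P_def by (intro compactin_Un) auto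
    show ?thesis using S U o c unfolding P_def by blast
  qed
  have 2: "P (\<Union>K)" if K: "\<forall>U\<in>K. P U" for K
  proof -
    have e1: "{x. Some x \<in> \<Union>K} = \<Union>((\<lambda>U. {x. Some x \<in> U}) ` K)" by auto
    have o: "openin T {x. Some x \<in> \<Union>K}"
      unfolding e1 using K unfolding P_def by (intro openin_Union) auto
    have "compactin T (topspace T - {x. Some x \<in> \<Union>K})" if N: "None \<in> \<Union>K"
    proof -
      obtain U0 where "U0 \<in> K" "None \<in> U0" using N by auto
      then have c: "compactin T (topspace T - {x. Some x \<in> U0})" using K unfolding P_def by auto
      show ?thesis
        by (rule closed_compactin[OF c]) (use \<open>U0 \<in> K\<close> o in auto)
    qed
    then show ?thesis using K o unfolding P_def by blast
  qed
  have "istopology P" unfolding istopology_def using 1 2 by blast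
  then show ?thesis unfolding one_point_compactification_def P_def by simp
qed

lemma topspace_opc: "topspace (one_point_compactification T) = insert None (Some ` topspace T)"
proof -
  have e: "{x. Some x \<in> insert None (Some ` topspace T)} = topspace T" by auto
  have e': "{x. Some x \<in> Some ` topspace T} = topspace T" by auto
  have "openin (one_point_compactification T) (insert None (Some ` topspace T))"
    by (simp add: openin_opc e e')
  then have "insert None (Some ` topspace T) \<subseteq> topspace (one_point_compactification T)" by (rule openin_subset)
  moreover have "topspace (one_point_compactification T) \<subseteq> insert None (Some ` topspace T)"
    using openin_opc[of T "topspace (one_point_compactification T)"] by simp
  ultimately show ?thesis by blast
qed

lemma compact_space_opc: "compact_space (one_point_compactification T)"
  unfolding compact_space_def compactin_def
proof (intro conjI allI impI)
  fix \<U> assume H: "(\<forall>U\<in>\<U>. openin (one_point_compactification T) U) \<and>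
      topspace (one_point_compactification T) \<subseteq> \<Union> \<U>"
  then obtain U0 where U0: "U0 \<in> \<U>" "None \<in> U0" by (auto simp: topspace_opc)
  then have c: "compactin T (topspace T - {x. Some x \<in> U0})" using H by (auto simp: openin_opc)
  have "\<exists>\<F>. finite \<F> \<and> \<F> \<subseteq> (\<lambda>U. {x. Some x \<in> U}) ` \<U> \<and> topspace T - {x. Some x \<in> U0} \<subseteq> \<Union>\<F>"
  proof -
    have "\<forall>V\<in>(\<lambda>U. {x. Some x \<in> U}) ` \<U>. openin T V" using H by (auto simp: openin_opc)
    moreover have "topspace T - {x. Some x \<in> U0} \<subseteq> \<Union>((\<lambda>U. {x. Some x \<in> U}) ` \<U>)"
      using H by (auto simp: topspace_opc)
    ultimately show ?thesis using c unfolding compactin_def by blast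
  qed
  then obtain \<F> where F: "finite \<F>" "\<F> \<subseteq> (\<lambda>U. {x. Some x \<in> U}) ` \<U>" "topspace T - {x. Some x \<in> U0} \<subseteq> \<Union>\<F>"
    by blast
  then obtain \<G> where G: "\<G> \<subseteq> \<U>" "finite \<G>" "\<F> = (\<lambda>U. {x. Some x \<in> U}) ` \<G>"
    by (meson finite_subset_image)
  show "\<exists>\<F>. finite \<F> \<and> \<F> \<subseteq> \<U> \<and> topspace (one_point_compactification T) \<subseteq> \<Union> \<F>"
  proof (intro exI conjI)
    show "finite (insert U0 \<G>)" using G by auto
    show "insert U0 \<G> \<subseteq> \<U>" using G U0 by auto
    show "topspace (one_point_compactification T) \<subseteq> \<Union> (insert U0 \<G>)"
      using F G U0 by (auto simp: topspace_opc)
  qed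
qed auto

lemma continuous_map_Some_opc: "continuous_map T (one_point_compactification T) Some"
  unfolding continuous_map_def
proof (intro conjI allI impI)
  show "Some \<in> topspace T \<rightarrow> topspace (one_point_compactification T)" by (auto simp: topspace_opc)
  fix U assume "openin (one_point_compactification T) U"
  moreover have "{x \<in> topspace T. Some x \<in> U} = {x. Some x \<in> U}" if "openin T {x. Some x \<in> U}"
    using openin_subset[OF that] by auto
  ultimately show "openin T {x \<in> topspace T. Some x \<in> U}" by (auto simp: openin_opc)
qed

lemma openin_opc_Some: "openin T V \<Longrightarrow> openin (one_point_compactification T) (Some ` V)"
  using openin_subset[of T V] by (auto simp: openin_opc image_iff)

lemma continuous_map_the_opc:
  "continuous_map (subtopology (one_point_compactification T) (Some ` topspace T)) T the"
  unfolding continuous_map_def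
proof (intro conjI allI impI)
  show "the \<in> topspace (subtopology (one_point_compactification T) (Some ` topspace T)) \<rightarrow> topspace T"
    by (auto simp: topspace_opc)
  fix V assume V: "openin T V"
  have "{x \<in> topspace (subtopology (one_point_compactification T) (Some ` topspace T)). the x \<in> V}
        = Some ` topspace T \<inter> Some ` V"
    using openin_subset[OF V] by (auto simp: topspace_opc)
  then show "openin (subtopology (one_point_compactification T) (Some ` topspace T))
          {x \<in> topspace (subtopology (one_point_compactification T) (Some ` topspace T)). the x \<in> V}"
    using openin_opc_Some[OF V] by (auto simp: openin_subtopology)
qed


lemma continuous_map_real_local:
  assumes H: "\<And>x e. x \<in> topspace T \<Longrightarrow> e > 0 \<Longrightarrow> \<exists>U. openin T U \<and> x \<in> U \<and> (\<forall>y\<in>U. \<bar>f y - f x\<bar> < e)"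
  shows "continuous_map T euclideanreal f"
  unfolding continuous_map_def
proof (intro conjI allI impI)
  show "f \<in> topspace T \<rightarrow> topspace euclideanreal" by simp
  fix V :: "real set" assume "openin euclideanreal V"
  then have V: "open V" by simp
  have "\<exists>U. openin T U \<and> x \<in> U \<and> U \<subseteq> {x \<in> topspace T. f x \<in> V}"
    if x: "x \<in> {x \<in> topspace T. f x \<in> V}" for x
  proof -
    obtain e where e: "e > 0" "ball (f x) e \<subseteq> V" using V x open_contains_ball by blast
    obtain U where U: "openin T U" "x \<in> U" "\<forall>y\<in>U. \<bar>f y - f x\<bar> < e" using H[of x e] x e by blast
    have "U \<subseteq> {x \<in> topspace T. f x \<in> V}"
    proof
      fix y assume y: "y \<in> U"
      then have "\<bar>f y - f x\<bar> < e" using U by blast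
      then have "f y \<in> ball (f x) e" by (simp add: dist_real_def abs_minus_commute)
      then have "f y \<in> V" using e by blast
      moreover have "y \<in> topspace T" using openin_subset[OF U(1)] y by blast
      ultimately show "y \<in> {x \<in> topspace T. f x \<in> V}" by blast
    qed
    then show ?thesis using U by blast
  qed
  then show "openin T {x \<in> topspace T. f x \<in> V}"
    by (subst openin_subopen) blast
qed


lemma boundary_homeo:
  assumes f: "homeomorphic_map T T f" and p: "p \<in> manifold_boundary T"
  shows "f p \<in> manifold_boundary T"
proof -
  obtain n U V h where n: "0 < n" and ch: "manifold_chart_at T n p U V h" and h0: "h p 0 = 0"
    and pT: "p \<in> topspace T"
    using p unfolding manifold_boundary_def by blast
  obtain f' where ff': "homeomorphic_maps T T f f'" using f homeomorphic_map_maps by blast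
  have U: "openin T U" "p \<in> U" "openin (half_space n) V"
      "homeomorphic_map (subtopology T U) (subtopology (half_space n) V) h"
    using ch unfolding manifold_chart_at_def by auto
  have UT: "U \<subseteq> topspace T" using U(1) openin_subset by blast
  have f'f: "\<And>x. x \<in> topspace T \<Longrightarrow> f' (f x) = x" and ff'2: "\<And>x. x \<in> topspace T \<Longrightarrow> f (f' x) = x"
    using ff' unfolding homeomorphic_maps_def by auto
  have fT: "\<And>x. x \<in> topspace T \<Longrightarrow> f x \<in> topspace T"
    using homeomorphic_imp_surjective_map[OF f] by blast
  have "openin T (f ` U)" using homeomorphic_map_openness[OF f UT] U(1) by simp
  moreover have "f p \<in> f ` U" using U by blast
  moreover have "homeomorphic_map (subtopology T (f ` U)) (subtopology (half_space n) V) (h \<circ> f')"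
  proof (rule homeomorphic_map_compose[OF _ U(4)])
    have "homeomorphic_map T T f'" using ff' homeomorphic_maps_sym homeomorphic_map_maps by blast
    moreover have "f' ` (topspace T \<inter> f ` U) = topspace T \<inter> U"
    proof
      show "f' ` (topspace T \<inter> f ` U) \<subseteq> topspace T \<inter> U" using f'f UT by auto
      show "topspace T \<inter> U \<subseteq> f' ` (topspace T \<inter> f ` U)"
      proof
        fix x assume "x \<in> topspace T \<inter> U"
        then show "x \<in> f' ` (topspace T \<inter> f ` U)" using f'f[of x] fT[of x] by (auto intro!: image_eqI[of x f' "f x"])
      qed
    qed
    ultimately show "homeomorphic_map (subtopology T (f ` U)) (subtopology T U) f'"
      by (rule homeomorphic_map_subtopologies)
  qed
  ultimately have "manifold_chart_at T n (f p) (f ` U) V (h \<circ> f')"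
    using U unfolding manifold_chart_at_def by blast
  moreover have "(h \<circ> f') (f p) 0 = 0" using h0 f'f pT by simp
  ultimately show ?thesis using n fT pT unfolding manifold_boundary_def by blast
qed



lemma pullback_metric:
  assumes F: "homeomorphic_map Y (mtopology_of m) F"
  obtains m' where "mtopology_of m' = Y" "mspace m' = topspace Y"
    "\<And>a b. mdist m' a b = mdist m (F a) (F b)"
proof -
  let ?M = "topspace Y" and ?d = "\<lambda>a b. mdist m (F a) (F b)"
  have inj: "inj_on F ?M" using F homeomorphic_imp_injective_map by blast
  have sur: "F ` ?M = mspace m" using homeomorphic_imp_surjective_map[OF F] by simp
  have MS: "Metric_space ?M ?d"
  proof
    show "\<And>x y. 0 \<le> ?d x y" by simp
    show "\<And>x y. ?d x y = ?d y x" by (simp add: mdist_commute)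
    have FM: "\<And>x. x \<in> ?M \<Longrightarrow> F x \<in> mspace m" using sur by blast
    show "\<And>x y. x \<in> ?M \<Longrightarrow> y \<in> ?M \<Longrightarrow> ?d x y = 0 \<longleftrightarrow> x = y"
      by (metis FM inj inj_onD mdist_zero)
    show "\<And>x y z. x \<in> ?M \<Longrightarrow> y \<in> ?M \<Longrightarrow> z \<in> ?M \<Longrightarrow> ?d x z \<le> ?d x y + ?d y z"
      using sur by (auto intro: mdist_triangle)
  qed
  interpret P: Metric_space ?M ?d by (rule MS)
  have mb: "P.mball a r = {b \<in> ?M. F b \<in> mball_of m (F a) r}" if "a \<in> ?M" for a r
    using that sur by auto
  have "P.mtopology = Y"
  proof (rule topology_eq[THEN iffD2], intro allI)
    fix U
    show "openin P.mtopology U \<longleftrightarrow> openin Y U"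
    proof (cases "U \<subseteq> ?M")
      case False
      then show ?thesis using openin_subset P.openin_mtopology by blast
    next
      case True
      have "openin Y U \<longleftrightarrow> openin (mtopology_of m) (F ` U)"
        using homeomorphic_map_openness[OF F True] by simp
      also have "\<dots> \<longleftrightarrow> (\<forall>x\<in>U. \<exists>r>0. mball_of m (F x) r \<subseteq> F ` U)"
        using True sur unfolding mtopology_of_def mball_of_def
        by (auto simp: Metric_space.openin_mtopology[OF Metric_space_mspace_mdist])
      also have "\<dots> \<longleftrightarrow> (\<forall>x\<in>U. \<exists>r>0. P.mball x r \<subseteq> U)"
      proof -
        have "mball_of m (F x) r \<subseteq> F ` U \<longleftrightarrow> P.mball x r \<subseteq> U" if "x \<in> U" for x r
        proof
          assume L: "mball_of m (F x) r \<subseteq> F ` U"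
          show "P.mball x r \<subseteq> U"
          proof
            fix b assume "b \<in> P.mball x r"
            then have b: "b \<in> ?M" "F b \<in> mball_of m (F x) r" using mb[of x r] that True by auto
            then obtain u where "u \<in> U" "F b = F u" using L by auto
            then show "b \<in> U" using inj b True unfolding inj_on_def by auto
          qed
        next
          assume R: "P.mball x r \<subseteq> U"
          show "mball_of m (F x) r \<subseteq> F ` U"
          proof
            fix y assume y: "y \<in> mball_of m (F x) r"
            then obtain b where b: "b \<in> ?M" "y = F b" using sur by auto
            then have "b \<in> P.mball x r" using mb[of x r] that True y by auto
            then show "y \<in> F ` U" using R b by auto
          qed
        qed
        then show ?thesis by (meson Ball_def)
      qed
      also have "\<dots> \<longleftrightarrow> openin P.mtopology U" using True P.openin_mtopology by auto
      finally show ?thesis by simp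
    qed
  qed
  show thesis
  proof (rule that[of "metric (?M, ?d)"])
    show "mtopology_of (metric (?M, ?d)) = Y" using \<open>P.mtopology = Y\<close> by simp
    show "mspace (metric (?M, ?d)) = ?M" by simp
    show "\<And>a b. mdist (metric (?M, ?d)) a b = ?d a b" by simp
  qed
qed



lemma Lebesgue_number:
  assumes c: "compact_space (mtopology_of m)" and U: "\<forall>U\<in>\<U>. openin (mtopology_of m) U"
    and cov: "mspace m \<subseteq> \<Union>\<U>"
  shows "\<exists>e>0. \<forall>x\<in>mspace m. \<exists>U\<in>\<U>. mball_of m x e \<subseteq> U"
proof (cases "mspace m = {}")
  case True
  then show ?thesis by (intro exI[of _ 1]) auto
next
  case False
  have ex: "\<forall>x\<in>mspace m. \<exists>r>0. \<exists>U\<in>\<U>. mball_of m x (2*r) \<subseteq> U"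
  proof
    fix x assume x: "x \<in> mspace m"
    then obtain U where "U \<in> \<U>" "x \<in> U" using cov by auto
    then obtain r where "r > 0" "mball_of m x r \<subseteq> U" using U
      unfolding mtopology_of_def mball_of_def
      by (meson Metric_space.openin_mtopology Metric_space_mspace_mdist)
    then show "\<exists>r>0. \<exists>U\<in>\<U>. mball_of m x (2*r) \<subseteq> U"
      using \<open>U \<in> \<U>\<close> by (intro exI[of _ "r/2"]) auto
  qed
  obtain r where r0: "\<forall>x\<in>mspace m. r x > 0 \<and> (\<exists>U\<in>\<U>. mball_of m x (2 * r x) \<subseteq> U)"
    using bchoice[OF ex] by blast
  then have r: "\<And>x. x \<in> mspace m \<Longrightarrow> r x > 0 \<and> (\<exists>U\<in>\<U>. mball_of m x (2 * r x) \<subseteq> U)"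
    by blast
  have "\<forall>V\<in>(\<lambda>x. mball_of m x (r x)) ` mspace m. openin (mtopology_of m) V"
    unfolding mtopology_of_def mball_of_def
    by (auto simp: Metric_space.openin_mball[OF Metric_space_mspace_mdist])
  moreover have "mspace m \<subseteq> \<Union>((\<lambda>x. mball_of m x (r x)) ` mspace m)"
  proof
    fix x assume x: "x \<in> mspace m"
    then have "x \<in> mball_of m x (r x)" using r[OF x] by simp
    then show "x \<in> \<Union>((\<lambda>x. mball_of m x (r x)) ` mspace m)" using x by blast
  qed
  moreover have "compactin (mtopology_of m) (mspace m)" using c by (simp add: compact_space_def)
  then have CC: "\<forall>\<V>. (\<forall>V\<in>\<V>. openin (mtopology_of m) V) \<and> mspace m \<subseteq> \<Union>\<V> \<longrightarrow> (\<exists>\<F>. finite \<F> \<and> \<F> \<subseteq> \<V> \<and> mspace m \<subseteq> \<Union>\<F>)"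
    unfolding compactin_def by blast
  ultimately obtain \<F> where F: "finite \<F>" "\<F> \<subseteq> (\<lambda>x. mball_of m x (r x)) ` mspace m" "mspace m \<subseteq> \<Union>\<F>"
    using CC[rule_format, of "(\<lambda>x. mball_of m x (r x)) ` mspace m"] by blast
  then obtain S where S: "S \<subseteq> mspace m" "finite S" "\<F> = (\<lambda>x. mball_of m x (r x)) ` S"
    by (meson finite_subset_image)
  have Sne: "S \<noteq> {}" using F S False by auto
  define e where "e = Min (r ` S)"
  have e: "e > 0" unfolding e_def
  proof (subst Min_gr_iff)
    show "finite (r ` S)" using S by simp
    show "r ` S \<noteq> {}" using Sne by simp
    show "\<forall>a\<in>r ` S. 0 < a" using S r by blast
  qed
  show ?thesis
  proof (intro exI conjI ballI)
    show "e > 0" by (rule e)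
    fix y assume y: "y \<in> mspace m"
    then obtain x where x: "x \<in> S" "y \<in> mball_of m x (r x)" using F S by auto
    then obtain U where U: "U \<in> \<U>" "mball_of m x (2 * r x) \<subseteq> U" using r S by blast
    have "e \<le> r x" unfolding e_def using S x by auto
    have "mball_of m y e \<subseteq> mball_of m x (2 * r x)"
    proof
      fix z assume z: "z \<in> mball_of m y e"
      then have "mdist m x z \<le> mdist m x y + mdist m y z" using x by (auto intro: mdist_triangle)
      then show "z \<in> mball_of m x (2 * r x)" using z x \<open>e \<le> r x\<close> by auto
    qed
    then show "\<exists>U\<in>\<U>. mball_of m y e \<subseteq> U" using U by blast
  qed
qed



definition lamf :: "'a metric \<Rightarrow> 'a set \<Rightarrow> 'a \<Rightarrow> real" where
  "lamf m A p = (if A = {} then 1 else min 1 (INF a\<in>A. mdist m p a))"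

lemma lamf_bounds: "0 \<le> lamf m A p" "lamf m A p \<le> 1"
  unfolding lamf_def by (auto intro: cINF_greatest)

lemma min1_lip:
  fixes a b D :: real
  assumes "a \<le> D + b" "b \<le> D + a"
  shows "\<bar>min 1 a - min 1 b\<bar> \<le> D"
  using assms unfolding min_def abs_if by auto

lemma lamf_lipschitz:
  assumes "A \<subseteq> mspace m" "p \<in> mspace m" "q \<in> mspace m"
  shows "\<bar>lamf m A p - lamf m A q\<bar> \<le> mdist m p q"
proof (cases "A = {}")
  case True
  then show ?thesis by (simp add: lamf_def)
next
  case False
  have bdd: "bdd_below ((\<lambda>a. mdist m x a) ` A)" for x by (rule bdd_belowI[of _ 0]) auto
  have 1: "(INF a\<in>A. mdist m x a) \<le> mdist m x y + (INF a\<in>A. mdist m y a)"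
    if "x \<in> mspace m" "y \<in> mspace m" for x y
  proof -
    have "(INF a\<in>A. mdist m x a) - mdist m x y \<le> (INF a\<in>A. mdist m y a)"
    proof (rule cINF_greatest[OF False])
      fix a assume a: "a \<in> A"
      have "(INF a\<in>A. mdist m x a) \<le> mdist m x a" by (rule cINF_lower[OF bdd a])
      also have "\<dots> \<le> mdist m x y + mdist m y a" using a assms that by (auto intro: mdist_triangle)
      finally show "(INF a\<in>A. mdist m x a) - mdist m x y \<le> mdist m y a" by simp
    qed
    then show ?thesis by simp
  qed
  have "(INF a\<in>A. mdist m p a) \<le> mdist m p q + (INF a\<in>A. mdist m q a)"
       "(INF a\<in>A. mdist m q a) \<le> mdist m p q + (INF a\<in>A. mdist m p a)"
    using 1[of p q] 1[of q p] assms by (auto simp: mdist_commute)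
  then show ?thesis using False unfolding lamf_def by (simp add: min1_lip)
qed

lemma continuous_map_lamf:
  assumes "A \<subseteq> mspace m"
  shows "continuous_map (mtopology_of m) euclideanreal (lamf m A)"
proof (rule continuous_map_real_local)
  fix x and e :: real assume x: "x \<in> topspace (mtopology_of m)" and e: "e > 0"
  show "\<exists>U. openin (mtopology_of m) U \<and> x \<in> U \<and> (\<forall>y\<in>U. \<bar>lamf m A y - lamf m A x\<bar> < e)"
  proof (intro exI conjI ballI)
    show "openin (mtopology_of m) (mball_of m x e)"
      unfolding mtopology_of_def mball_of_def
      by (auto simp: Metric_space.openin_mball[OF Metric_space_mspace_mdist])
    show "x \<in> mball_of m x e" using x e by simp
    fix y assume "y \<in> mball_of m x e"
    then show "\<bar>lamf m A y - lamf m A x\<bar> < e"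
      using lamf_lipschitz[OF assms, of y x] by (auto simp: mdist_commute)
  qed
qed

lemma lamf_zero_iff:
  assumes "closedin (mtopology_of m) A" "p \<in> mspace m"
  shows "lamf m A p = 0 \<longleftrightarrow> p \<in> A"
proof (cases "A = {}")
  case True
  then show ?thesis by (simp add: lamf_def)
next
  case False
  have AM: "A \<subseteq> mspace m" using closedin_subset[OF assms(1)] by simp
  have bdd: "bdd_below ((\<lambda>a. mdist m p a) ` A)" by (rule bdd_belowI[of _ 0]) auto
  show ?thesis
  proof
    assume "p \<in> A"
    then have "(INF a\<in>A. mdist m p a) \<le> 0" using cINF_lower[OF bdd \<open>p \<in> A\<close>] assms by simp
    moreover have "(INF a\<in>A. mdist m p a) \<ge> 0" by (rule cINF_greatest[OF False]) auto
    ultimately show "lamf m A p = 0" using False by (simp add: lamf_def)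
  next
    assume L: "lamf m A p = 0"
    show "p \<in> A"
    proof (rule ccontr)
      assume "p \<notin> A"
      then have "p \<in> mspace m - A" using assms by auto
      moreover have "openin (mtopology_of m) (mspace m - A)" using assms(1)
        by (metis closedin_def topspace_mtopology_of)
      ultimately obtain r where r: "r > 0" "mball_of m p r \<subseteq> mspace m - A"
        unfolding mtopology_of_def mball_of_def
        by (meson Metric_space.openin_mtopology Metric_space_mspace_mdist)
      have "r \<le> (INF a\<in>A. mdist m p a)"
      proof (rule cINF_greatest[OF False])
        fix a assume "a \<in> A"
        then have "a \<notin> mball_of m p r" using r(2) by blast
        then show "r \<le> mdist m p a" using AM \<open>a \<in> A\<close> assms(2) by (auto simp: not_less)
      qed
      then have "min 1 r \<le> lamf m A p" using False unfolding lamf_def by simp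
      moreover have "min 1 r > 0" using r by simp
      ultimately show False using L by simp
    qed
  qed
qed



lemma continuous_map_Euclidean_coord:
  "continuous_map (Euclidean_space n) euclideanreal (\<lambda>x. x i)"
  unfolding Euclidean_space_def
  by (rule continuous_map_from_subtopology) (rule continuous_map_product_projection, simp)

lemma perturb_Euclidean:
  assumes S: "openin (Euclidean_space k) S" and b: "b \<in> S" and i: "i < k"
  shows "\<exists>e>0. \<forall>t. \<bar>t\<bar> < e \<longrightarrow> b(i := b i + t) \<in> S"
proof -
  have bT: "b \<in> topspace (Euclidean_space k)" using openin_subset[OF S] b by blast
  let ?p = "\<lambda>t::real. b(i := b i + t)"
  have c: "continuous_map euclideanreal (Euclidean_space k) ?p"
    unfolding Euclidean_space_def continuous_map_in_subtopology
  proof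
    show "continuous_map euclideanreal (powertop_real UNIV) ?p"
      unfolding continuous_map_componentwise_UNIV
    proof
      fix j
      show "continuous_map euclideanreal euclideanreal (\<lambda>x. (?p x) j)"
        by (cases "j = i") (auto intro!: continuous_intros)
    qed
    show "?p \<in> topspace euclideanreal \<rightarrow> {x. \<forall>j\<ge>k. x j = 0}"
      using bT i by (auto simp: topspace_Euclidean_space)
  qed
  then have "openin euclideanreal {t \<in> topspace euclideanreal. ?p t \<in> S}"
    using S by (simp add: continuous_map_def)
  then have o: "open {t. ?p t \<in> S}" by simp
  have "0 \<in> {t. ?p t \<in> S}" using b by simp
  then obtain e where e: "e > 0" "ball 0 e \<subseteq> {t. ?p t \<in> S}"
    using o open_contains_ball by blast
  show ?thesis
  proof (intro exI conjI allI impI)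
    show "e > 0" by (rule e)
    fix t :: real assume "\<bar>t\<bar> < e"
    then have "t \<in> ball 0 e" by (simp add: dist_real_def)
    then show "?p t \<in> S" using e by blast
  qed
qed

lemma topspace_half_space: "topspace (half_space n) = {x. (\<forall>i\<ge>n. x i = 0) \<and> 0 \<le> x 0}"
  by (auto simp: half_space_def topspace_Euclidean_space)

lemma openin_half_space_iff:
  "openin (half_space n) S \<longleftrightarrow> (\<exists>Ob. openin (Euclidean_space n) Ob \<and> S = Ob \<inter> {x. 0 \<le> x 0})"
  by (auto simp: half_space_def openin_subtopology)

lemma chart_open_image:
  assumes ch: "manifold_chart_at T n q U V h" and W: "openin T W" "W \<subseteq> U"
  shows "openin (half_space n) (h ` W)"
proof -
  have U: "openin T U" "openin (half_space n) V"
      and hh: "homeomorphic_map (subtopology T U) (subtopology (half_space n) V) h"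
    using ch unfolding manifold_chart_at_def by auto
  have "openin (subtopology T U) W" unfolding openin_subtopology using W by (intro exI[of _ W]) auto
  then have "openin (subtopology (half_space n) V) (h ` W)"
    using homeomorphic_map_openness[OF hh] openin_subset by blast
  then show ?thesis using U(2) openin_trans_full by blast
qed

lemma chart_interior_open:
  assumes ch: "manifold_chart_at T n q U V h" and W: "openin T W" "W \<subseteq> U"
  shows "openin (Euclidean_space n) (h ` W \<inter> {x. 0 < x 0})"
proof -
  obtain Ob where O: "openin (Euclidean_space n) Ob" "h ` W = Ob \<inter> {x. 0 \<le> x 0}"
    using chart_open_image[OF assms] openin_half_space_iff by blast
  have "openin (Euclidean_space n) {x \<in> topspace (Euclidean_space n). x 0 \<in> {0<..}}"
    by (rule openin_continuous_map_preimage[OF continuous_map_Euclidean_coord]) simp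
  then have "openin (Euclidean_space n) (Ob \<inter> {x \<in> topspace (Euclidean_space n). x 0 \<in> {0<..}})"
    using O(1) by (rule openin_Int[rotated])
  moreover have "Ob \<inter> {x \<in> topspace (Euclidean_space n). x 0 \<in> {0<..}} = h ` W \<inter> {x. 0 < x 0}"
    using O openin_subset[OF O(1)] by auto
  ultimately show ?thesis by simp
qed

lemma transition_open:
  assumes c1: "manifold_chart_at T n q U V h" and c2: "manifold_chart_at T n' q' U' V' h'"
    and nn: "n' \<le> n" and A: "openin (Euclidean_space n) A" "A \<subseteq> h ` (U \<inter> U')"
  shows "openin (Euclidean_space n) (h' ` {x \<in> U \<inter> U'. h x \<in> A})"
proof -
  have U: "openin T U" "openin (half_space n) V"
      and hh: "homeomorphic_map (subtopology T U) (subtopology (half_space n) V) h"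
    using c1 unfolding manifold_chart_at_def by auto
  have U': "openin T U'" "openin (half_space n') V'"
      and hh': "homeomorphic_map (subtopology T U') (subtopology (half_space n') V') h'"
    using c2 unfolding manifold_chart_at_def by auto
  have UT: "U \<subseteq> topspace T" "U' \<subseteq> topspace T" using U U' openin_subset by auto
  obtain hi where hi: "homeomorphic_maps (subtopology T U) (subtopology (half_space n) V) h hi"
    using hh homeomorphic_map_maps by blast
  have hiT: "\<And>x. x \<in> U \<Longrightarrow> hi (h x) = x" using hi UT unfolding homeomorphic_maps_def by auto
  have hV: "\<And>x. x \<in> U \<Longrightarrow> h x \<in> V \<and> h x \<in> topspace (half_space n)"
    using homeomorphic_imp_surjective_map[OF hh] UT by auto
  have chi: "continuous_map (subtopology (half_space n) V) (subtopology T U) hi"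
    using hi unfolding homeomorphic_maps_def by auto
  have AV: "A \<subseteq> V" "A \<subseteq> {x. 0 \<le> x 0}" using A(2) hV by (auto simp: topspace_half_space)
  have sub: "subtopology (Euclidean_space n) A = subtopology (subtopology (half_space n) V) A"
    unfolding half_space_def subtopology_subtopology using AV
    by (metis Int_absorb1 inf.absorb_iff2 inf_assoc)
  have c_hi: "continuous_map (subtopology (Euclidean_space n) A) (subtopology T U') hi"
  proof -
    have "continuous_map (subtopology (Euclidean_space n) A) (subtopology T U) hi"
      unfolding sub by (rule continuous_map_from_subtopology[OF chi])
    then have "continuous_map (subtopology (Euclidean_space n) A) T hi"
      using continuous_map_in_subtopology by blast
    moreover have "hi \<in> topspace (subtopology (Euclidean_space n) A) \<rightarrow> U'"
      using A(2) hiT by auto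
    ultimately show ?thesis by (simp add: continuous_map_in_subtopology)
  qed
  have c_h': "continuous_map (subtopology T U') (Euclidean_space n) h'"
  proof -
    have "continuous_map (subtopology T U') (half_space n') h'"
      using homeomorphic_imp_continuous_map[OF hh'] continuous_map_in_subtopology by blast
    then have "continuous_map (subtopology T U') (Euclidean_space n') h'"
      unfolding half_space_def continuous_map_in_subtopology by blast
    moreover have "Euclidean_space n' = subtopology (Euclidean_space n) (topspace (Euclidean_space n'))"
      by (metis Euclidean_space_def nn inf.absorb_iff2 subset_Euclidean_space subtopology_subtopology topspace_Euclidean_space)
    ultimately show ?thesis by (metis continuous_map_in_subtopology)
  qed
  have cf: "continuous_map (subtopology (Euclidean_space n) A) (Euclidean_space n) (h' \<circ> hi)"
    using continuous_map_compose[OF c_hi c_h'] .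
  have inj': "inj_on h' U'"
    using homeomorphic_imp_injective_map[OF hh'] UT by (simp add: Int_absorb1)
  have inj: "inj_on (h' \<circ> hi) A"
  proof
    fix a b assume ab: "a \<in> A" "b \<in> A" "(h' \<circ> hi) a = (h' \<circ> hi) b"
    obtain x where x: "x \<in> U \<inter> U'" "a = h x" using ab A(2) by auto
    obtain y where y: "y \<in> U \<inter> U'" "b = h y" using ab A(2) by auto
    have "h' x = h' y" using ab x y hiT by simp
    then have "x = y" using inj' x y unfolding inj_on_def by blast
    then show "a = b" using x y by simp
  qed
  have img: "(h' \<circ> hi) ` A = h' ` {x \<in> U \<inter> U'. h x \<in> A}"
  proof
    show "(h' \<circ> hi) ` A \<subseteq> h' ` {x \<in> U \<inter> U'. h x \<in> A}"
    proof
      fix z assume "z \<in> (h' \<circ> hi) ` A"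
      then obtain a where a: "a \<in> A" "z = h' (hi a)" by auto
      then obtain x where x: "x \<in> U \<inter> U'" "a = h x" using A(2) by auto
      then show "z \<in> h' ` {x \<in> U \<inter> U'. h x \<in> A}" using a hiT by auto
    qed
    show "h' ` {x \<in> U \<inter> U'. h x \<in> A} \<subseteq> (h' \<circ> hi) ` A"
    proof
      fix z assume "z \<in> h' ` {x \<in> U \<inter> U'. h x \<in> A}"
      then obtain x where x: "x \<in> U \<inter> U'" "h x \<in> A" "z = h' x" by auto
      then show "z \<in> (h' \<circ> hi) ` A" using hiT by (auto intro!: image_eqI[of _ _ "h x"])
    qed
  qed
  show ?thesis
    using invariance_of_domain_Euclidean_space[OF A(1) cf inj] img by simp
qed


lemma chart_maps:
  assumes "manifold_chart_at T n q U V h" "x \<in> U"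
  shows "h x \<in> V" "h x \<in> topspace (half_space n)" "U \<subseteq> topspace T" "openin T U"
proof -
  have U: "openin T U" and hh: "homeomorphic_map (subtopology T U) (subtopology (half_space n) V) h"
    using assms(1) unfolding manifold_chart_at_def by auto
  show UT: "U \<subseteq> topspace T" using U openin_subset by blast
  have "h ` (topspace T \<inter> U) = topspace (half_space n) \<inter> V"
    using homeomorphic_imp_surjective_map[OF hh] by simp
  then show "h x \<in> V" "h x \<in> topspace (half_space n)" using assms(2) UT by auto
  show "openin T U" by (rule U)
qed

lemma chart_coord_cont:
  assumes "manifold_chart_at T n q U V h"
  shows "continuous_map (subtopology T U) euclideanreal (\<lambda>x. h x i)"
proof -
  have hh: "homeomorphic_map (subtopology T U) (subtopology (half_space n) V) h"
    using assms unfolding manifold_chart_at_def by auto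
  have "continuous_map (subtopology T U) (Euclidean_space n) h"
    using homeomorphic_imp_continuous_map[OF hh]
    unfolding half_space_def continuous_map_in_subtopology by blast
  then show ?thesis
    using continuous_map_compose[OF _ continuous_map_Euclidean_coord[of n i]] by (simp add: o_def)
qed

lemma no_both:
  assumes c1: "manifold_chart_at T n q U V h" and h1: "h q 0 > 0"
    and c2: "manifold_chart_at T n' q U' V' h'" and n': "0 < n'" and h2: "h' q 0 = 0"
  shows False
proof -
  have q: "q \<in> U" "q \<in> U'" using c1 c2 unfolding manifold_chart_at_def by auto
  have W0: "openin T (U \<inter> U')" using chart_maps(4)[OF c1 q(1)] chart_maps(4)[OF c2 q(2)] by (rule openin_Int)
  have hq: "h q \<in> topspace (half_space n)" using chart_maps[OF c1 q(1)] by simp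
  have n: "0 < n"
  proof (rule ccontr)
    assume "\<not> 0 < n"
    then have "h q 0 = 0" using hq by (auto simp: topspace_half_space)
    then show False using h1 by simp
  qed
  show False
  proof (cases "n' \<le> n")
    case True
    define A where "A = h ` (U \<inter> U') \<inter> {x. 0 < x 0}"
    have Ao: "openin (Euclidean_space n) A" unfolding A_def
      by (rule chart_interior_open[OF c1 W0]) auto
    have S: "openin (Euclidean_space n) (h' ` {x \<in> U \<inter> U'. h x \<in> A})"
      by (rule transition_open[OF c1 c2 True Ao]) (auto simp: A_def)
    have b: "h' q \<in> h' ` {x \<in> U \<inter> U'. h x \<in> A}" using q h1 by (auto simp: A_def)
    obtain e where e: "e > 0" "\<forall>t. \<bar>t\<bar> < e \<longrightarrow> (h' q)(0 := h' q 0 + t) \<in> h' ` {x \<in> U \<inter> U'. h x \<in> A}"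
      using perturb_Euclidean[OF S b n] by blast
    moreover have "\<bar>- (e/2)\<bar> < e" using e(1) by simp
    ultimately have "(h' q)(0 := h' q 0 + - (e/2)) \<in> h' ` {x \<in> U \<inter> U'. h x \<in> A}" by blast
    then obtain x where x: "x \<in> U'" "h' x = (h' q)(0 := - (e/2))" using h2 by auto
    have "h' x \<in> topspace (half_space n')" using chart_maps[OF c2 x(1)] by simp
    then have "0 \<le> h' x 0" by (simp add: topspace_half_space)
    then show False using x e by simp
  next
    case False
    then have nn: "n \<le> n'" "n < n'" by auto
    have o: "openin (half_space n') (h' ` (U \<inter> U'))" by (rule chart_open_image[OF c2 W0]) auto
    then obtain Ob where Ob: "openin (Euclidean_space n') Ob" "h' ` (U \<inter> U') = Ob \<inter> {x. 0 \<le> x 0}"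
      using openin_half_space_iff by blast
    have "h' q \<in> Ob" using Ob q by blast
    then obtain e where e: "e > 0" "\<forall>t. \<bar>t\<bar> < e \<longrightarrow> (h' q)(0 := h' q 0 + t) \<in> Ob"
      using perturb_Euclidean[OF Ob(1) _ n'] by blast
    define c where "c = (h' q)(0 := e/2)"
    have "c \<in> Ob" using e h2 unfolding c_def by simp
    moreover have "c 0 = e/2" unfolding c_def by simp
    ultimately have "c \<in> Ob \<inter> {x. 0 \<le> x 0}" using e(1) by simp
    then have cW: "c \<in> h' ` (U \<inter> U')" by (simp only: Ob(2))
    have c0: "0 < c 0" using \<open>c 0 = e/2\<close> e(1) by simp
    define A where "A = h' ` (U' \<inter> U) \<inter> {x. 0 < x 0}"
    have Ao: "openin (Euclidean_space n') A" unfolding A_def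
      by (rule chart_interior_open[OF c2]) (use W0 in \<open>auto simp: Int_commute\<close>)
    have S: "openin (Euclidean_space n') (h ` {x \<in> U' \<inter> U. h' x \<in> A})"
      by (rule transition_open[OF c2 c1 nn(1) Ao]) (auto simp: A_def)
    obtain x where x: "x \<in> U \<inter> U'" "c = h' x" using cW by auto
    have b: "h x \<in> h ` {x \<in> U' \<inter> U. h' x \<in> A}" using x c0 by (auto simp: A_def)
    obtain e' where e': "e' > 0" "\<forall>t. \<bar>t\<bar> < e' \<longrightarrow> (h x)(n := h x n + t) \<in> h ` {x \<in> U' \<inter> U. h' x \<in> A}"
      using perturb_Euclidean[OF S b nn(2)] by blast
    have hx: "h x \<in> topspace (half_space n)" using chart_maps[OF c1] x by auto
    then have "h x n = 0" by (simp add: topspace_half_space)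
    moreover have "(h x)(n := h x n + e'/2) \<in> h ` {x \<in> U' \<inter> U. h' x \<in> A}" using e' by simp
    ultimately obtain y where y: "y \<in> U" "h y = (h x)(n := e'/2)" by auto
    have "h y \<in> topspace (half_space n)" using chart_maps[OF c1 y(1)] by simp
    then have "h y n = 0" by (simp add: topspace_half_space)
    then show False using y e' by simp
  qed
qed

lemma boundary_closed:
  assumes M: "is_manifold T"
  shows "closedin T (manifold_boundary T)"
proof -
  obtain n where n: "\<forall>x\<in>topspace T. \<exists>U V h. manifold_chart_at T n x U V h"
    using M unfolding is_manifold_def by blast
  have BT: "manifold_boundary T \<subseteq> topspace T" unfolding manifold_boundary_def by blast
  have "\<exists>W. openin T W \<and> p \<in> W \<and> W \<subseteq> topspace T - manifold_boundary T"
    if p: "p \<in> topspace T - manifold_boundary T" for p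
  proof -
    obtain U V h where ch: "manifold_chart_at T n p U V h" using n p by blast
    have pU: "p \<in> U" using ch unfolding manifold_chart_at_def by blast
    have UT: "U \<subseteq> topspace T" "openin T U" using chart_maps[OF ch pU] by auto
    show ?thesis
    proof (cases "n = 0")
      case True
      have hh: "homeomorphic_map (subtopology T U) (subtopology (half_space n) V) h"
        using ch unfolding manifold_chart_at_def by auto
      have inj: "inj_on h U" using homeomorphic_imp_injective_map[OF hh] UT by (simp add: Int_absorb1)
      have hz: "h x = (\<lambda>i. 0)" if "x \<in> U" for x
        using chart_maps(2)[OF ch that] True by (auto simp: topspace_half_space fun_eq_iff)
      have "x = p" if "x \<in> U" for x
        using inj_onD[OF inj _ that pU] hz[OF that] hz[OF pU] by simp
      then have "U = {p}" using pU by blast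
      then show ?thesis using UT p by blast
    next
      case False
      have "0 \<le> h p 0" using chart_maps(2)[OF ch pU] by (simp add: topspace_half_space)
      moreover have "h p 0 \<noteq> 0"
      proof
        assume h0: "h p 0 = 0"
        have "0 < n \<and> manifold_chart_at T n p U V h \<and> h p 0 = 0" using False ch h0 by simp
        then have "p \<in> manifold_boundary T" using p unfolding manifold_boundary_def by blast
        then show False using p by blast
      qed
      ultimately have hp: "0 < h p 0" by simp
      define W where "W = {x \<in> topspace (subtopology T U). h x 0 \<in> {0<..}}"
      have "openin (subtopology T U) W" unfolding W_def
        by (rule openin_continuous_map_preimage[OF chart_coord_cont[OF ch]]) simp
      then have Wo: "openin T W" using UT openin_trans_full by blast
      have "W \<subseteq> topspace T - manifold_boundary T"
      proof
        fix x assume x: "x \<in> W"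
        then have xU: "x \<in> U" "0 < h x 0" "x \<in> topspace T" unfolding W_def by auto
        have chx: "manifold_chart_at T n x U V h" using ch xU unfolding manifold_chart_at_def by blast
        show "x \<in> topspace T - manifold_boundary T"
        proof
          show "x \<in> topspace T" by (rule xU(3))
          show "x \<notin> manifold_boundary T"
          proof
            assume "x \<in> manifold_boundary T"
            then obtain n' U' V' h' where a: "0 < n'" "manifold_chart_at T n' x U' V' h'" "h' x 0 = 0"
              unfolding manifold_boundary_def by blast
            show False by (rule no_both[OF chx xU(2) a(2) a(1) a(3)])
          qed
        qed
      qed
      moreover have "p \<in> W" using pU hp UT p unfolding W_def by auto
      ultimately show ?thesis using Wo by blast
    qed
  qed
  then have "openin T (topspace T - manifold_boundary T)"
    by (subst openin_subopen) blast
  then show ?thesis using BT by (simp add: closedin_def)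
qed


locale ezctx =
  fixes X :: "'a topology" and Z :: "'a set" and \<phi> :: "'g::group_add \<Rightarrow> 'a \<Rightarrow> 'a"
  assumes EZ: "EZ_structure_via \<phi> X Z"
    and mfd: "is_manifold (subtopology X (topspace X - Z))"
begin

definition "NS = topspace X - Z"
definition "NT = subtopology X NS"
definition "Bd = manifold_boundary NT"
definition "CT = mapping_cyl NT"
definition "CS = topspace CT"
definition "OT = one_point_compactification CT"
definition "PT = prod_topology OT X"
definition "YS = compactified_carrier X Z"
definition "YT = compactified_space X Z"

lemma EZ_parts:
  "compact_space X" "metrizable_space X" "Z_set X Z"
  "top_action \<phi> NT" "fixed_point_free_action \<phi> NT" "properly_discontinuous_action \<phi> NT"
  "cocompact_action \<phi> NT" "null_translates \<phi> X Z" "top_action \<phi> X"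
  using EZ unfolding EZ_structure_via_def Z_structure_via_def euclidean_retract_def NT_def NS_def
  by auto

lemma Hausdorff_X: "Hausdorff_space X"
  using EZ_parts(2) metrizable_imp_Hausdorff_space by blast

lemma closed_Z: "closedin X Z"
  using EZ_parts(3) unfolding Z_set_def by blast

lemma Z_sub: "Z \<subseteq> topspace X" using closed_Z closedin_subset by blast

lemma NS_sub: "NS \<subseteq> topspace X" unfolding NS_def by blast

lemma topspace_NT: "topspace NT = NS" unfolding NT_def using NS_sub by auto

lemma open_NS: "openin X NS" unfolding NS_def using closed_Z by (simp add: openin_diff)

lemma topX_split: "topspace X = NS \<union> Z" "NS \<inter> Z = {}" using Z_sub unfolding NS_def by auto

definition "mX = (SOME m. mtopology_of m = X \<and> (\<forall>e>0. \<exists>f. continuous_map X X f \<and>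
              (\<forall>x\<in>topspace X. f x \<notin> Z \<and> mdist m (f x) x < e)))"

lemma mX_props: "mtopology_of mX = X"
  "\<forall>e>0. \<exists>f. continuous_map X X f \<and> (\<forall>x\<in>topspace X. f x \<notin> Z \<and> mdist mX (f x) x < e)"
proof -
  have "\<exists>m. mtopology_of m = X \<and> (\<forall>e>0. \<exists>f. continuous_map X X f \<and>
              (\<forall>x\<in>topspace X. f x \<notin> Z \<and> mdist m (f x) x < e))"
    using EZ_parts(3) unfolding Z_set_def by blast
  then have "mtopology_of mX = X \<and> (\<forall>e>0. \<exists>f. continuous_map X X f \<and>
              (\<forall>x\<in>topspace X. f x \<notin> Z \<and> mdist mX (f x) x < e))"
    unfolding mX_def by (rule someI_ex)
  then show "mtopology_of mX = X"
    "\<forall>e>0. \<exists>f. continuous_map X X f \<and> (\<forall>x\<in>topspace X. f x \<notin> Z \<and> mdist mX (f x) x < e)"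
    by auto
qed

lemma mspace_mX: "mspace mX = topspace X"
  by (metis mX_props(1) topspace_mtopology_of)

lemma NS_dense:
  assumes "openin X W" "z \<in> W"
  shows "\<exists>p\<in>NS. p \<in> W"
proof -
  have zX: "z \<in> mspace mX" using assms openin_subset mspace_mX by blast
  obtain r where r: "r > 0" "mball_of mX z r \<subseteq> W"
    using assms mX_props(1) unfolding mtopology_of_def mball_of_def
    by (metis Metric_space.openin_mtopology Metric_space_mspace_mdist)
  obtain f where f: "continuous_map X X f" "\<forall>x\<in>topspace X. f x \<notin> Z \<and> mdist mX (f x) z < r \<or> x \<noteq> z"
    using mX_props(2) r(1) by blast
  have fz: "f z \<in> topspace X" using f(1) zX mspace_mX by (auto simp: continuous_map_def)
  have "f z \<notin> Z" "mdist mX (f z) z < r" using f(2) zX mspace_mX by auto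
  then have "f z \<in> mball_of mX z r" using fz zX mspace_mX by (simp add: mdist_commute)
  then show ?thesis using r fz \<open>f z \<notin> Z\<close> unfolding NS_def by blast
qed

lemma hom_X: "homeomorphic_map X X (\<phi> g)"
  using EZ_parts(9) unfolding top_action_def by blast

lemma hom_NT: "homeomorphic_map NT NT (\<phi> g)"
  using EZ_parts(4) unfolding top_action_def by blast

lemma act_zero: "x \<in> topspace X \<Longrightarrow> \<phi> 0 x = x"
  using EZ_parts(9) unfolding top_action_def by blast

lemma act_add: "x \<in> topspace X \<Longrightarrow> \<phi> (g + h) x = \<phi> g (\<phi> h x)"
  using EZ_parts(9) unfolding top_action_def by blast

lemma act_X: "x \<in> topspace X \<Longrightarrow> \<phi> g x \<in> topspace X"
  using homeomorphic_imp_surjective_map[OF hom_X] by blast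

lemma act_NS: "x \<in> NS \<Longrightarrow> \<phi> g x \<in> NS"
  using homeomorphic_imp_surjective_map[OF hom_NT] topspace_NT by blast

lemma act_inv: "x \<in> topspace X \<Longrightarrow> \<phi> (- g) (\<phi> g x) = x"
  using act_add[of x "-g" g] act_zero by simp

lemma act_inv2: "x \<in> topspace X \<Longrightarrow> \<phi> g (\<phi> (- g) x) = x"
  using act_add[of x g "-g"] act_zero by simp

lemma act_Z: "x \<in> Z \<Longrightarrow> \<phi> g x \<in> Z"
proof (rule ccontr)
  assume x: "x \<in> Z" and n: "\<phi> g x \<notin> Z"
  have "x \<in> topspace X" using x Z_sub by blast
  then have "\<phi> g x \<in> NS" using n act_X unfolding NS_def by blast
  then have "\<phi> (-g) (\<phi> g x) \<in> NS" by (rule act_NS)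
  then show False using act_inv \<open>x \<in> topspace X\<close> x topX_split by auto
qed

lemma act_Bd: "p \<in> Bd \<Longrightarrow> \<phi> g p \<in> Bd"
  unfolding Bd_def by (rule boundary_homeo[OF hom_NT])

lemma Bd_sub: "Bd \<subseteq> NS" unfolding Bd_def manifold_boundary_def using topspace_NT by auto

lemma act_Bd_iff: "p \<in> NS \<Longrightarrow> \<phi> g p \<in> Bd \<longleftrightarrow> p \<in> Bd"
proof
  assume p: "p \<in> NS" "\<phi> g p \<in> Bd"
  have "\<phi> (-g) (\<phi> g p) \<in> Bd" by (rule act_Bd[OF p(2)])
  then show "p \<in> Bd" using act_inv p NS_sub by auto
qed (rule act_Bd)

lemma cont_act_X: "continuous_map X X (\<phi> g)"
  using hom_X homeomorphic_imp_continuous_map by blast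

lemma cont_act_NT: "continuous_map NT NT (\<phi> g)"
  using hom_NT homeomorphic_imp_continuous_map by blast

definition "AZ = Z \<union> Bd"

lemma closed_Bd_NT: "closedin NT Bd"
  unfolding Bd_def NT_def NS_def using boundary_closed[OF mfd] by simp

lemma closed_AZ: "closedin X AZ"
proof -
  obtain C where C: "closedin X C" "Bd = C \<inter> NS"
    using closed_Bd_NT unfolding NT_def closedin_subtopology by blast
  have "AZ = Z \<union> C" unfolding AZ_def C(2) using closedin_subset[OF C(1)] topX_split by auto
  then show ?thesis using closed_Z C(1) by (simp add: closedin_Un)
qed

definition "lam = lamf mX AZ"

lemma lam_cont: "continuous_map X euclideanreal lam"
  unfolding lam_def using continuous_map_lamf[of AZ mX] closed_AZ closedin_subset mX_props(1) mspace_mX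
  by metis

lemma lam_bounds: "0 \<le> lam p" "lam p \<le> 1"
  unfolding lam_def by (rule lamf_bounds)+

lemma lam_lip: "p \<in> topspace X \<Longrightarrow> q \<in> topspace X \<Longrightarrow> \<bar>lam p - lam q\<bar> \<le> mdist mX p q"
  unfolding lam_def using lamf_lipschitz[of AZ mX p q] closed_AZ closedin_subset mspace_mX by metis

lemma lam_zero: "p \<in> topspace X \<Longrightarrow> lam p = 0 \<longleftrightarrow> p \<in> Z \<or> p \<in> Bd"
  unfolding lam_def using lamf_zero_iff[of mX AZ p] closed_AZ mX_props(1) mspace_mX unfolding AZ_def
  by auto

lemma lam_pos: "p \<in> NS \<Longrightarrow> p \<notin> Bd \<Longrightarrow> 0 < lam p"
  using lam_zero[of p] lam_bounds[of p] NS_sub topX_split by force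

lemma lam_Z: "p \<in> Z \<Longrightarrow> lam p = 0" using lam_zero Z_sub by blast
lemma lam_Bd: "p \<in> Bd \<Longrightarrow> lam p = 0" using lam_zero Bd_sub NS_sub by blast

lemma lam_act_zero: "p \<in> topspace X \<Longrightarrow> lam p = 0 \<Longrightarrow> lam (\<phi> g p) = 0"
  using lam_zero act_Z act_Bd act_X by blast

end


context ezctx begin

abbreviation "IT \<equiv> top_of_set {0..1::real}"
abbreviation "col \<equiv> collapse_map NT"

lemma CT_eq: "CT = quotient_top (prod_topology NT IT) col"
  unfolding CT_def mapping_cyl_def by simp

lemma col_eq: "col (p, t) = (p, if p \<in> Bd then 0 else t)"
  unfolding collapse_map_def Bd_def by simp

lemma topspace_prodI: "topspace (prod_topology NT IT) = NS \<times> {0..1}"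
  by (simp add: topspace_NT)

lemma CS_eq: "CS = col ` (NS \<times> {0..1})"
  unfolding CS_def CT_eq topspace_quotient_top topspace_prodI ..

lemma mem_CS: "c \<in> CS \<longleftrightarrow> fst c \<in> NS \<and> 0 \<le> snd c \<and> snd c \<le> 1 \<and> (fst c \<in> Bd \<longrightarrow> snd c = 0)"
proof
  assume "c \<in> CS"
  then obtain p t where "p \<in> NS" "t \<in> {0..1}" "c = col (p, t)" unfolding CS_eq by auto
  then show "fst c \<in> NS \<and> 0 \<le> snd c \<and> snd c \<le> 1 \<and> (fst c \<in> Bd \<longrightarrow> snd c = 0)"
    by (auto simp: col_eq)
next
  assume R: "fst c \<in> NS \<and> 0 \<le> snd c \<and> snd c \<le> 1 \<and> (fst c \<in> Bd \<longrightarrow> snd c = 0)"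
  then have "col (fst c, snd c) = c" by (cases c) (auto simp: col_eq)
  moreover have "(fst c, snd c) \<in> NS \<times> {0..1}" using R by (simp add: mem_Times_iff)
  ultimately show "c \<in> CS" unfolding CS_eq by (metis image_eqI)
qed

lemma col_CS: "x \<in> NS \<times> {0..1} \<Longrightarrow> col x \<in> CS"
  unfolding CS_eq by blast

lemma col_cont: "continuous_map (prod_topology NT IT) CT col"
  unfolding CT_eq by (rule continuous_map_quotient_top)

lemma cont_from_CT:
  assumes g: "continuous_map (prod_topology NT IT) W g"
    and eq: "\<And>p t. p \<in> NS \<Longrightarrow> t \<in> {0..1} \<Longrightarrow> g (p, t) = k (col (p, t))"
  shows "continuous_map CT W k"
  unfolding CT_eq
proof (rule continuous_map_from_quotient_top)
  show "continuous_map (prod_topology NT IT) W (k \<circ> col)"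
    using g by (rule continuous_map_eq) (auto simp: eq topspace_NT)
qed

lemma fst_cont_CT: "continuous_map CT NT fst"
proof (rule cont_from_CT[of _ fst])
  show "continuous_map (prod_topology NT IT) NT fst" by (rule continuous_map_fst)
qed (simp add: col_eq)

lemma fst_cont_CT_X: "continuous_map CT X fst"
  using fst_cont_CT unfolding NT_def continuous_map_in_subtopology by blast

lemma sigma_cont:
  assumes mu: "continuous_map X euclideanreal mu" and z: "\<And>p. p \<in> Bd \<Longrightarrow> mu p = 0"
  shows "continuous_map CT euclideanreal (\<lambda>c. snd c * mu (fst c))"
proof (rule cont_from_CT[of _ "\<lambda>x. snd x * mu (fst x)"])
  have m1: "continuous_map (prod_topology NT IT) X fst"
    using continuous_map_fst[of NT IT] unfolding NT_def continuous_map_in_subtopology by blast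
  have "continuous_map (prod_topology NT IT) euclideanreal (mu \<circ> fst)"
    using continuous_map_compose[OF m1 mu] .
  moreover have "continuous_map (prod_topology NT IT) euclideanreal snd"
    using continuous_map_snd[of NT IT] continuous_map_from_subtopology continuous_map_in_subtopology by blast
  ultimately show "continuous_map (prod_topology NT IT) euclideanreal (\<lambda>x. snd x * mu (fst x))"
    by (auto intro: continuous_map_real_mult simp: o_def)
qed (auto simp: col_eq z)

lemma closed_cyl:
  assumes "closedin NT K"
  shows "closedin CT {c \<in> CS. fst c \<in> K}"
  unfolding CT_eq
proof (rule closedin_quotient_top)
  show "{c \<in> CS. fst c \<in> K} \<subseteq> col ` topspace (prod_topology NT IT)"
    unfolding topspace_prodI CS_eq by blast
  have "{x \<in> topspace (prod_topology NT IT). col x \<in> {c \<in> CS. fst c \<in> K}}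
        = {x \<in> topspace (prod_topology NT IT). fst x \<in> K}"
    using closedin_subset[OF assms] by (auto simp: topspace_prodI col_eq mem_CS topspace_NT)
  moreover have "closedin (prod_topology NT IT) {x \<in> topspace (prod_topology NT IT). fst x \<in> K}"
    by (rule closedin_continuous_map_preimage[OF continuous_map_fst assms])
  ultimately show "closedin (prod_topology NT IT) {x \<in> topspace (prod_topology NT IT). col x \<in> {c \<in> CS. fst c \<in> K}}"
    by simp
qed

lemma cyl_image: "K \<subseteq> NS \<Longrightarrow> col ` (K \<times> {0..1}) = {c \<in> CS. fst c \<in> K}"
proof
  assume K: "K \<subseteq> NS"
  show "col ` (K \<times> {0..1}) \<subseteq> {c \<in> CS. fst c \<in> K}"
    using K col_CS by (auto simp: col_eq)
  show "{c \<in> CS. fst c \<in> K} \<subseteq> col ` (K \<times> {0..1})"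
  proof
    fix c assume c: "c \<in> {c \<in> CS. fst c \<in> K}"
    then have "col (fst c, snd c) = c" using mem_CS by (cases c) (auto simp: col_eq)
    moreover have "(fst c, snd c) \<in> K \<times> {0..1}" using c mem_CS by (simp add: mem_Times_iff)
    ultimately show "c \<in> col ` (K \<times> {0..1})" by (metis image_eqI)
  qed
qed

lemma compact_cyl:
  assumes "compactin NT K"
  shows "compactin CT {c \<in> CS. fst c \<in> K}"
proof -
  have KN: "K \<subseteq> NS" using compactin_subset_topspace[OF assms] topspace_NT by simp
  have "compactin (prod_topology NT IT) (K \<times> {0..1})"
    using assms by (simp add: compactin_Times compactin_subtopology compact_Icc compactin_euclidean_iff)
  then have "compactin CT (col ` (K \<times> {0..1}))" by (rule image_compactin[OF _ col_cont])
  then show ?thesis using cyl_image[OF KN] by simp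
qed

lemma topspace_OT: "topspace OT = insert None (Some ` CS)"
  unfolding OT_def CS_def by (rule topspace_opc)

lemma openin_OT: "openin OT U \<longleftrightarrow> U \<subseteq> insert None (Some ` CS) \<and> openin CT {x. Some x \<in> U} \<and>
      (None \<in> U \<longrightarrow> compactin CT (CS - {x. Some x \<in> U}))"
  unfolding OT_def CS_def by (rule openin_opc)

lemma topspace_PT: "topspace PT = insert None (Some ` CS) \<times> topspace X"
  unfolding PT_def by (simp add: topspace_OT)

abbreviation "G \<equiv> graph_embedding"

lemma G_eq: "G c = (Some c, fst c)" unfolding graph_embedding_def by simp

lemma YS_eq': "YS = PT closure_of (G ` CS)"
  unfolding YS_def compactified_carrier_def PT_def OT_def CT_def CS_def NT_def NS_def by simp

lemma YT_eq: "YT = subtopology PT YS"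
  unfolding YT_def compactified_space_def YS_def PT_def OT_def CT_def NT_def NS_def by simp

lemma GCS_sub: "G ` CS \<subseteq> topspace PT"
  using mem_CS NS_sub by (auto simp: topspace_PT G_eq)

lemma YS_closure: "y \<in> YS \<longleftrightarrow> y \<in> topspace PT \<and> (\<forall>T. y \<in> T \<and> openin PT T \<longrightarrow> (\<exists>y'. y' \<in> G ` CS \<and> y' \<in> T))"
  unfolding YS_eq' by (rule in_closure_of)

lemma YS_sub_case1:
  assumes cl: "\<And>T. (Some c, p) \<in> T \<Longrightarrow> openin PT T \<Longrightarrow> \<exists>y'. y' \<in> G ` CS \<and> y' \<in> T"
    and cCS: "c \<in> CS" and pX: "p \<in> topspace X"
  shows "p = fst c"
proof (rule ccontr)
  assume F: "p \<noteq> fst c"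
  have fcX: "fst c \<in> topspace X" using cCS mem_CS NS_sub by auto
  obtain V1 V2 where V: "openin X V1" "openin X V2" "fst c \<in> V1" "p \<in> V2" "disjnt V1 V2"
    using Hausdorff_X[unfolded Hausdorff_space_def, rule_format, of "fst c" p] fcX pX F by blast
  define T where "T = Some ` {c' \<in> topspace CT. fst c' \<in> V1} \<times> V2"
  have "openin CT {c' \<in> topspace CT. fst c' \<in> V1}"
    by (rule openin_continuous_map_preimage[OF fst_cont_CT_X V(1)])
  then have "openin OT (Some ` {c' \<in> topspace CT. fst c' \<in> V1})"
    unfolding OT_def by (rule openin_opc_Some)
  then have To: "openin PT T" unfolding T_def PT_def using V(2) by (simp add: openin_prod_Times_iff)
  have "c \<in> {c' \<in> topspace CT. fst c' \<in> V1}" using cCS V(3) CS_def by blast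
  then have "(Some c, p) \<in> T" unfolding T_def using V(4) by blast
  then obtain y' where "y' \<in> G ` CS" "y' \<in> T" using cl To by blast
  then obtain c' where "c' \<in> CS" "fst c' \<in> V1" "fst c' \<in> V2" unfolding T_def by (auto simp: G_eq)
  then show False using V(5) by (auto simp: disjnt_def)
qed

lemma YS_sub_case2:
  assumes cl: "\<And>T. (None, p) \<in> T \<Longrightarrow> openin PT T \<Longrightarrow> \<exists>y'. y' \<in> G ` CS \<and> y' \<in> T"
    and pN: "p \<in> NS"
  shows False
proof -
  have pX: "p \<in> topspace X" using pN NS_sub by blast
  have pM: "p \<in> mspace mX" using pX mspace_mX by simp
  have "openin (mtopology_of mX) NS" using open_NS mX_props(1) by simp
  then obtain r where r: "r > 0" "mball_of mX p r \<subseteq> NS" using pN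
    unfolding mtopology_of_def mball_of_def
    by (metis Metric_space.openin_mtopology Metric_space_mspace_mdist)
  define K0 where "K0 = mcball_of mX p (r/2)"
  have "r/2 < r" using r by simp
  then have K0N: "K0 \<subseteq> NS" using r unfolding K0_def mcball_of_def mball_of_def
    by (metis Metric_space.mcball_subset_mball_concentric Metric_space_mspace_mdist order_trans)
  have K0c: "closedin X K0" unfolding K0_def using mX_props(1)
    unfolding mtopology_of_def mcball_of_def
    by (metis Metric_space.closedin_mcball Metric_space_mspace_mdist)
  have K0k: "compactin NT K0" unfolding NT_def compactin_subtopology
    using closedin_compact_space[OF EZ_parts(1) K0c] K0N by simp
  have K0cl: "closedin NT K0" unfolding NT_def using K0c K0N by (rule closedin_subset_topspace)
  define K where "K = {c \<in> CS. fst c \<in> K0}"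
  have Kc: "compactin CT K" unfolding K_def by (rule compact_cyl[OF K0k])
  have Kcl: "closedin CT K" unfolding K_def by (rule closed_cyl[OF K0cl])
  define U where "U = insert None (Some ` (CS - K))"
  have eU: "{x. Some x \<in> U} = CS - K" unfolding U_def by auto
  have eU2: "CS - (CS - K) = K" using closedin_subset[OF Kcl] CS_def by auto
  have Uo: "openin OT U"
    unfolding openin_OT eU eU2
  proof (intro conjI impI)
    show "U \<subseteq> insert None (Some ` CS)" unfolding U_def by auto
    show "openin CT (CS - K)" using Kcl CS_def by (simp add: openin_diff)
    show "compactin CT K" by (rule Kc)
  qed
  define T where "T = U \<times> mball_of mX p (r/2)"
  have "openin X (mball_of mX p (r/2))" using mX_props(1)
    unfolding mtopology_of_def mball_of_def
    by (metis Metric_space.openin_mball Metric_space_mspace_mdist)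
  then have To: "openin PT T" unfolding T_def PT_def using Uo by (simp add: openin_prod_Times_iff)
  have "p \<in> mball_of mX p (r/2)" using pM r by simp
  then have "(None, p) \<in> T" unfolding T_def U_def by blast
  then obtain y' where "y' \<in> G ` CS" "y' \<in> T" using cl To by blast
  then obtain c' where c': "c' \<in> CS" "Some c' \<in> U" "fst c' \<in> mball_of mX p (r/2)"
    unfolding T_def by (auto simp: G_eq)
  then have "fst c' \<in> K0" unfolding K0_def by auto
  then have "c' \<in> K" using c' K_def by auto
  then show False using c' U_def by auto
qed

lemma YS_sup_case:
  assumes z: "z \<in> Z"
  shows "(None, z) \<in> YS"
proof -
  have yT: "(None, z) \<in> topspace PT" using z Z_sub by (auto simp: topspace_PT)
  have "\<exists>y'. y' \<in> G ` CS \<and> y' \<in> T" if T: "(None, z) \<in> T" "openin PT T" for T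
  proof -
    obtain U W where UW: "openin OT U" "openin X W" "None \<in> U" "z \<in> W" "U \<times> W \<subseteq> T"
      using T(2)[unfolded PT_def openin_prod_topology_alt, rule_format, OF T(1)] by blast
    define K where "K = CS - {x. Some x \<in> U}"
    have Kc: "compactin CT K" using UW unfolding K_def openin_OT by blast
    have "compactin NT (fst ` K)" by (rule image_compactin[OF Kc fst_cont_CT])
    then have fKc: "compactin X (fst ` K)" and fKN: "fst ` K \<subseteq> NS"
      unfolding NT_def compactin_subtopology by auto
    have "closedin X (fst ` K)" by (rule compactin_imp_closedin[OF Hausdorff_X fKc])
    then have W'o: "openin X (W - fst ` K)" using UW by (simp add: openin_diff)
    have "z \<notin> fst ` K" using fKN z topX_split by blast
    then have "z \<in> W - fst ` K" using UW by blast
    then obtain p where p: "p \<in> NS" "p \<in> W - fst ` K" using NS_dense[OF W'o] by blast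
    have cCS: "(p, 0) \<in> CS" using p by (simp add: mem_CS)
    have "(p, 0) \<notin> K" using p(2) by (metis DiffD2 fst_conv image_eqI)
    then have "Some (p, 0) \<in> U" using cCS K_def by blast
    then have "(Some (p, 0), p) \<in> U \<times> W" using p by blast
    then have "G (p, 0) \<in> T" using UW(5) by (auto simp: G_eq)
    then show ?thesis using cCS by blast
  qed
  then show ?thesis unfolding YS_closure using yT by blast
qed

lemma YS_struct: "YS = G ` CS \<union> ({None} \<times> Z)"
proof
  show "YS \<subseteq> G ` CS \<union> ({None} \<times> Z)"
  proof
    fix y assume y: "y \<in> YS"
    obtain a p where yap: "y = (a, p)" by (cases y)
    have yT: "y \<in> topspace PT" using y YS_closure by blast
    have cl: "\<And>T. (a, p) \<in> T \<Longrightarrow> openin PT T \<Longrightarrow> \<exists>y'. y' \<in> G ` CS \<and> y' \<in> T"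
      using y YS_closure yap by blast
    have pX: "p \<in> topspace X" and a: "a \<in> insert None (Some ` CS)" using yT yap topspace_PT by auto
    show "y \<in> G ` CS \<union> ({None} \<times> Z)"
    proof (cases a)
      case (Some c)
      then have cCS: "c \<in> CS" using a by auto
      have "p = fst c" using YS_sub_case1[OF _ cCS pX] cl Some by blast
      then have "y = G c" using yap Some by (simp add: G_eq)
      then show ?thesis using cCS by blast
    next
      case None
      have "p \<notin> NS" using YS_sub_case2 cl None by blast
      then have "p \<in> Z" using pX topX_split by blast
      then show ?thesis using yap None by blast
    qed
  qed
  show "G ` CS \<union> ({None} \<times> Z) \<subseteq> YS"
  proof
    fix y assume y: "y \<in> G ` CS \<union> ({None} \<times> Z)"
    show "y \<in> YS"
    proof (cases "y \<in> G ` CS")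
      case True
      then show ?thesis unfolding YS_eq' using closure_of_subset[OF GCS_sub] by blast
    next
      case False
      then obtain z where z: "y = (None, z)" "z \<in> Z" using y by blast
      then show ?thesis using YS_sup_case by blast
    qed
  qed
qed

lemma first_conj: "YS - G ` CS = {None} \<times> Z"
  using YS_struct by (auto simp: G_eq)

end


lemma local_from_open_piece:
  assumes W: "openin T W" "x \<in> W" and g: "continuous_map (subtopology T W) euclideanreal g"
    and eq: "\<And>y. y \<in> W \<Longrightarrow> f y = g y" and e: "e > 0"
  shows "\<exists>U. openin T U \<and> x \<in> U \<and> (\<forall>y\<in>U. \<bar>f y - f x\<bar> < e)"
proof -
  have "openin (subtopology T W) {y \<in> topspace (subtopology T W). g y \<in> {g x - e <..< g x + e}}"
    by (rule openin_continuous_map_preimage[OF g]) simp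
  then have o: "openin T {y \<in> topspace (subtopology T W). g y \<in> {g x - e <..< g x + e}}"
    using W(1) openin_trans_full by blast
  have xW: "x \<in> topspace (subtopology T W)" using W openin_subset by auto
  show ?thesis
  proof (intro exI conjI ballI)
    show "openin T {y \<in> topspace (subtopology T W). g y \<in> {g x - e <..< g x + e}}" by (rule o)
    show "x \<in> {y \<in> topspace (subtopology T W). g y \<in> {g x - e <..< g x + e}}" using xW e by simp
    fix y assume "y \<in> {y \<in> topspace (subtopology T W). g y \<in> {g x - e <..< g x + e}}"
    then have "y \<in> W" "g y \<in> {g x - e <..< g x + e}" by auto
    then show "\<bar>f y - f x\<bar> < e" using eq[of y] eq[OF W(2)] by (simp add: abs_less_iff)
  qed
qed

context ezctx begin

definition sfun :: "('a \<Rightarrow> real) \<Rightarrow> ('a \<times> real) option \<times> 'a \<Rightarrow> real" where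
  "sfun mu y = (case fst y of None \<Rightarrow> 0 | Some c \<Rightarrow> snd c * mu (fst c))"

lemma sfun_G: "sfun mu (G c) = snd c * mu (fst c)" by (simp add: sfun_def G_eq)
lemma sfun_None: "sfun mu (None, z) = 0" by (simp add: sfun_def)

lemma topspace_YT: "topspace YT = YS"
  unfolding YT_eq using YS_struct GCS_sub Z_sub by (auto simp: topspace_PT)

lemma sfun_bound:
  assumes "y \<in> YS" "\<And>p. p \<in> topspace X \<Longrightarrow> 0 \<le> mu p"
  shows "\<bar>sfun mu y\<bar> \<le> mu (snd y)"
proof -
  have "y \<in> G ` CS \<or> y \<in> {None} \<times> Z" using assms YS_struct by blast
  then show ?thesis
  proof
    assume "y \<in> G ` CS"
    then obtain c where c: "c \<in> CS" "y = G c" by blast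
    then have "0 \<le> snd c" "snd c \<le> 1" "fst c \<in> topspace X" using mem_CS NS_sub by auto
    moreover have "0 \<le> mu (fst c)" using assms(2) calculation(3) by blast
    ultimately have "\<bar>snd c * mu (fst c)\<bar> \<le> mu (fst c)"
      by (simp add: abs_mult mult_left_le_one_le)
    then show ?thesis using c by (simp add: sfun_def G_eq)
  next
    assume "y \<in> {None} \<times> Z"
    then show ?thesis using assms Z_sub by (auto simp: sfun_def)
  qed
qed

lemma open_GCS_piece: "openin YT (YS \<inter> (Some ` CS \<times> topspace X))"
proof -
  have "openin OT (Some ` CS)" unfolding OT_def CS_def by (rule openin_opc_Some) simp
  then have "openin PT (Some ` CS \<times> topspace X)" unfolding PT_def by (simp add: openin_prod_Times_iff)
  then show ?thesis unfolding YT_eq by (rule openin_subtopology_Int2)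
qed

lemma the_fst_cont: "continuous_map (subtopology YT (YS \<inter> (Some ` CS \<times> topspace X))) CT (\<lambda>y. the (fst y))"
proof -
  have "continuous_map (subtopology YT (YS \<inter> (Some ` CS \<times> topspace X))) OT fst"
    unfolding YT_eq PT_def subtopology_subtopology by (rule continuous_map_subtopology_fst)
  moreover have "fst \<in> topspace (subtopology YT (YS \<inter> (Some ` CS \<times> topspace X))) \<rightarrow> Some ` CS"
    by auto
  ultimately have A: "continuous_map (subtopology YT (YS \<inter> (Some ` CS \<times> topspace X))) (subtopology OT (Some ` CS)) fst"
    by (simp add: continuous_map_in_subtopology)
  have B: "continuous_map (subtopology OT (Some ` CS)) CT the"
    unfolding OT_def CS_def by (rule continuous_map_the_opc)
  show ?thesis using continuous_map_compose[OF A B] by (simp add: o_def)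
qed

lemma sfun_cont:
  assumes mu: "continuous_map X euclideanreal mu" and pos: "\<And>p. p \<in> topspace X \<Longrightarrow> 0 \<le> mu p"
    and zZ: "\<And>p. p \<in> Z \<Longrightarrow> mu p = 0" and zB: "\<And>p. p \<in> Bd \<Longrightarrow> mu p = 0"
  shows "continuous_map YT euclideanreal (sfun mu)"
proof (rule continuous_map_real_local)
  fix y and e :: real assume y: "y \<in> topspace YT" and e: "e > 0"
  then have yY: "y \<in> YS" using topspace_YT by simp
  show "\<exists>U. openin YT U \<and> y \<in> U \<and> (\<forall>y'\<in>U. \<bar>sfun mu y' - sfun mu y\<bar> < e)"
  proof (cases "y \<in> G ` CS")
    case True
    then obtain c where c: "c \<in> CS" "y = G c" by blast
    let ?W = "YS \<inter> (Some ` CS \<times> topspace X)"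
    have yW: "y \<in> ?W" using yY c GCS_sub by (auto simp: G_eq topspace_PT)
    have g: "continuous_map (subtopology YT ?W) euclideanreal ((\<lambda>c. snd c * mu (fst c)) \<circ> (\<lambda>y. the (fst y)))"
      by (rule continuous_map_compose[OF the_fst_cont sigma_cont[OF mu zB]])
    show ?thesis
      by (rule local_from_open_piece[OF open_GCS_piece yW g _ e]) (auto simp: sfun_def)
  next
    case False
    then obtain z where z: "y = (None, z)" "z \<in> Z" using yY YS_struct by blast
    have m: "continuous_map YT euclideanreal (mu \<circ> snd)"
    proof (rule continuous_map_compose[OF _ mu])
      show "continuous_map YT X snd" unfolding YT_eq PT_def by (rule continuous_map_subtopology_snd)
    qed
    have "openin YT {x \<in> topspace YT. (mu \<circ> snd) x \<in> {-e<..<e}}"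
      by (rule openin_continuous_map_preimage[OF m]) simp
    moreover have "y \<in> {x \<in> topspace YT. (mu \<circ> snd) x \<in> {-e<..<e}}" using y z zZ e by simp
    moreover have "\<forall>y'\<in>{x \<in> topspace YT. (mu \<circ> snd) x \<in> {-e<..<e}}. \<bar>sfun mu y' - sfun mu y\<bar> < e"
    proof
      fix y' assume y': "y' \<in> {x \<in> topspace YT. (mu \<circ> snd) x \<in> {-e<..<e}}"
      then have "\<bar>sfun mu y'\<bar> \<le> mu (snd y')" using sfun_bound pos topspace_YT by auto
      then show "\<bar>sfun mu y' - sfun mu y\<bar> < e" using y' z by (simp add: sfun_None)
    qed
    ultimately show ?thesis by blast
  qed
qed

definition "Rset = {x. fst x \<in> topspace X \<and> 0 \<le> snd x \<and> snd x \<le> lam (fst x)}"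
definition "RT = subtopology (prod_topology X euclideanreal) Rset"
definition "Fm y = (snd y, sfun lam y)"
definition "Finv x = (if fst x \<in> Z then (None, fst x)
     else (Some (fst x, if lam (fst x) = 0 then 0 else snd x / lam (fst x)), fst x))"

lemma topspace_RT: "topspace RT = Rset"
  unfolding RT_def Rset_def by auto

lemma Fm_G: "c \<in> CS \<Longrightarrow> Fm (G c) = (fst c, snd c * lam (fst c))"
  by (simp add: Fm_def sfun_def G_eq)

lemma Fm_None: "Fm (None, z) = (z, 0)"
  by (simp add: Fm_def sfun_None)

lemma Fm_in: "y \<in> YS \<Longrightarrow> Fm y \<in> Rset"
proof -
  assume "y \<in> YS"
  then have "y \<in> G ` CS \<or> y \<in> {None} \<times> Z" using YS_struct by blast
  then show "Fm y \<in> Rset"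
  proof
    assume "y \<in> G ` CS"
    then obtain c where c: "c \<in> CS" "y = G c" by blast
    then have "fst c \<in> NS" "0 \<le> snd c" "snd c \<le> 1" using mem_CS by auto
    moreover have "0 \<le> lam (fst c)" by (rule lam_bounds)
    ultimately have "0 \<le> snd c * lam (fst c)" "snd c * lam (fst c) \<le> lam (fst c)"
      by (auto simp: mult_left_le_one_le)
    then show ?thesis using c Fm_G NS_sub \<open>fst c \<in> NS\<close> by (auto simp: Rset_def)
  next
    assume "y \<in> {None} \<times> Z"
    then show ?thesis using Z_sub lam_bounds by (auto simp: Rset_def Fm_None)
  qed
qed

lemma Finv_in: "x \<in> Rset \<Longrightarrow> Finv x \<in> YS \<and> Fm (Finv x) = x"
proof -
  assume x: "x \<in> Rset"
  obtain p r where pr: "x = (p, r)" by (cases x)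
  have pX: "p \<in> topspace X" and r: "0 \<le> r" "r \<le> lam p" using x pr by (auto simp: Rset_def)
  show ?thesis
  proof (cases "p \<in> Z")
    case True
    then have "r = 0" using r lam_Z by force
    then show ?thesis using True pr YS_struct by (auto simp: Finv_def Fm_None)
  next
    case False
    then have pN: "p \<in> NS" using pX NS_def by blast
    show ?thesis
    proof (cases "lam p = 0")
      case True
      then have pB: "p \<in> Bd" "r = 0" using lam_zero pX False r True by auto
      have c: "(p, 0) \<in> CS" using pN by (simp add: mem_CS)
      have "Finv x = G (p, 0)" using pr False True by (simp add: Finv_def G_eq)
      moreover have "Fm (G (p, 0)) = x" using Fm_G[OF c] pr pB by simp
      ultimately show ?thesis using c YS_struct by auto
    next
      case nz: False
      then have lp: "0 < lam p" using lam_bounds[of p] by simp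
      have pB: "p \<notin> Bd" using nz lam_Bd by blast
      have "0 \<le> r / lam p" "r / lam p \<le> 1" using r lp by auto
      then have c: "(p, r / lam p) \<in> CS" using pN pB by (simp add: mem_CS)
      have "Finv x = G (p, r / lam p)" using pr False nz by (simp add: Finv_def G_eq)
      moreover have "Fm (G (p, r / lam p)) = x" using Fm_G[OF c] pr lp by simp
      ultimately show ?thesis using c YS_struct by auto
    qed
  qed
qed

lemma Finv_Fm: "y \<in> YS \<Longrightarrow> Finv (Fm y) = y"
proof -
  assume "y \<in> YS"
  then have "y \<in> G ` CS \<or> y \<in> {None} \<times> Z" using YS_struct by blast
  then show "Finv (Fm y) = y"
  proof
    assume "y \<in> G ` CS"
    then obtain c where c: "c \<in> CS" "y = G c" by blast
    obtain p t where pt: "c = (p, t)" by (cases c)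
    have pN: "p \<in> NS" and t: "0 \<le> t" "t \<le> 1" "p \<in> Bd \<longrightarrow> t = 0" using c pt mem_CS by auto
    have pZ: "p \<notin> Z" using pN topX_split by blast
    have "Finv (Fm y) = Finv (p, t * lam p)" using c pt Fm_G by simp
    also have "\<dots> = (Some (p, t), p)"
    proof (cases "lam p = 0")
      case True
      then have "p \<in> Bd" using lam_zero pN NS_sub pZ by blast
      then show ?thesis using True t pZ by (simp add: Finv_def)
    next
      case False
      then show ?thesis using pZ by (simp add: Finv_def)
    qed
    finally show ?thesis using c pt by (simp add: G_eq)
  next
    assume "y \<in> {None} \<times> Z"
    then show ?thesis by (auto simp: Finv_def Fm_None)
  qed
qed

lemma compact_YT: "compact_space YT"
proof -
  have "compact_space PT" unfolding PT_def OT_def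
    using compact_space_opc[of CT] EZ_parts(1) by (simp add: compact_space_prod_topology)
  moreover have "closedin PT YS" unfolding YS_eq' by simp
  ultimately have "compactin PT YS" by (rule closedin_compact_space)
  then show ?thesis unfolding YT_eq by (rule compact_space_subtopology)
qed

lemma Fm_cont: "continuous_map YT RT Fm"
proof -
  have "continuous_map YT (prod_topology X euclideanreal) Fm"
    unfolding continuous_map_pairwise
  proof
    show "continuous_map YT X (fst \<circ> Fm)"
      unfolding YT_eq PT_def Fm_def o_def by (simp add: continuous_map_subtopology_snd)
    have "continuous_map YT euclideanreal (sfun lam)"
      by (rule sfun_cont[OF lam_cont lam_bounds(1) lam_Z lam_Bd])
    then show "continuous_map YT euclideanreal (snd \<circ> Fm)"
      unfolding Fm_def o_def by simp
  qed
  moreover have "Fm \<in> topspace YT \<rightarrow> Rset" using Fm_in topspace_YT by auto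
  ultimately show ?thesis unfolding RT_def by (simp add: continuous_map_in_subtopology)
qed

lemma Fm_hom: "homeomorphic_map YT RT Fm"
proof (rule continuous_imp_homeomorphic_map[OF Fm_cont compact_YT])
  show "Hausdorff_space RT" unfolding RT_def
    using Hausdorff_X by (intro Hausdorff_space_subtopology) (simp add: Hausdorff_space_prod_topology)
  show "Fm ` topspace YT = topspace RT"
    unfolding topspace_YT topspace_RT using Fm_in Finv_in by (auto intro!: image_eqI[where x="Finv _"])
  show "inj_on Fm (topspace YT)"
    unfolding topspace_YT by (rule inj_on_inverseI[where g=Finv]) (rule Finv_Fm)
qed

lemma Fm_homs: "homeomorphic_maps YT RT Fm Finv"
proof -
  obtain g where g: "homeomorphic_maps YT RT Fm g" using Fm_hom homeomorphic_map_maps by blast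
  have "continuous_map RT YT g" "\<forall>x\<in>topspace RT. Fm (g x) = x" using g unfolding homeomorphic_maps_def by auto
  have eq: "g x = Finv x" if "x \<in> topspace RT" for x
  proof -
    have "g x \<in> topspace YT" using g that unfolding homeomorphic_maps_def continuous_map_def by blast
    then have "g x = Finv (Fm (g x))" using Finv_Fm topspace_YT by simp
    then show ?thesis using g that unfolding homeomorphic_maps_def by simp
  qed
  have "continuous_map RT YT Finv"
    using \<open>continuous_map RT YT g\<close> by (rule continuous_map_eq) (simp add: eq)
  then show ?thesis
    using Fm_cont Finv_Fm Finv_in topspace_YT topspace_RT unfolding homeomorphic_maps_def by auto
qed

lemma Finv_cont: "continuous_map RT YT Finv"
  using Fm_homs unfolding homeomorphic_maps_def by blast

definition "mR = submetric (prod_metric mX euclidean_metric) Rset"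

lemma mR_top: "mtopology_of mR = RT"
  unfolding mR_def RT_def by (simp add: mtopology_of_submetric mX_props(1))

lemma mR_dist: "mdist mR = prod_dist (mdist mX) dist"
  unfolding mR_def by simp

definition "mY = (SOME m'. mtopology_of m' = YT \<and> mspace m' = topspace YT \<and>
                  (\<forall>a b. mdist m' a b = mdist mR (Fm a) (Fm b)))"

lemma mY_props: "mtopology_of mY = YT" "mspace mY = YS"
  "\<And>a b. mdist mY a b = prod_dist (mdist mX) dist (Fm a) (Fm b)"
proof -
  have h: "homeomorphic_map YT (mtopology_of mR) Fm" using Fm_hom mR_top by simp
  obtain m' where "mtopology_of m' = YT" "mspace m' = topspace YT" "\<And>a b. mdist m' a b = mdist mR (Fm a) (Fm b)"
    using pullback_metric[OF h] by blast
  then have "\<exists>m'. mtopology_of m' = YT \<and> mspace m' = topspace YT \<and> (\<forall>a b. mdist m' a b = mdist mR (Fm a) (Fm b))"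
    by blast
  then have "mtopology_of mY = YT \<and> mspace mY = topspace YT \<and> (\<forall>a b. mdist mY a b = mdist mR (Fm a) (Fm b))"
    unfolding mY_def by (rule someI_ex)
  then show "mtopology_of mY = YT" "mspace mY = YS"
    "\<And>a b. mdist mY a b = prod_dist (mdist mX) dist (Fm a) (Fm b)"
    using topspace_YT mR_dist by auto
qed

end


context ezctx begin

definition "psi g = map_prod (map_option (induced_action \<phi> g)) (\<phi> g)"

lemma ind_eq: "induced_action \<phi> g (p, t) = (\<phi> g p, t)"
  by (simp add: induced_action_def)

lemma psi_G: "psi g (G c) = G (induced_action \<phi> g c)"
  by (cases c) (simp add: psi_def G_eq ind_eq)

lemma psi_None: "psi g (None, z) = (None, \<phi> g z)"
  by (simp add: psi_def)

lemma ind_CS: "c \<in> CS \<Longrightarrow> induced_action \<phi> g c \<in> CS"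
proof -
  assume c: "c \<in> CS"
  obtain p t where pt: "c = (p, t)" by (cases c)
  then have "p \<in> NS" "0 \<le> t" "t \<le> 1" "p \<in> Bd \<longrightarrow> t = 0" using c mem_CS by auto
  moreover have "\<phi> g p \<in> Bd \<longleftrightarrow> p \<in> Bd" using act_Bd_iff calculation(1) by blast
  ultimately show ?thesis using pt act_NS by (simp add: mem_CS ind_eq)
qed

lemma psi_GCS: "y \<in> G ` CS \<Longrightarrow> psi g y \<in> G ` CS"
  using psi_G ind_CS by auto

lemma psi_YS: "y \<in> YS \<Longrightarrow> psi g y \<in> YS"
proof -
  assume "y \<in> YS"
  then have "y \<in> G ` CS \<or> y \<in> {None} \<times> Z" using YS_struct by blast
  then show ?thesis
  proof
    assume "y \<in> G ` CS" then show ?thesis using psi_GCS YS_struct by blast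
  next
    assume "y \<in> {None} \<times> Z" then show ?thesis using psi_None act_Z YS_struct by auto
  qed
qed

lemma psi_inv: "y \<in> YS \<Longrightarrow> psi (- g) (psi g y) = y"
proof -
  assume "y \<in> YS"
  then have "y \<in> G ` CS \<or> y \<in> {None} \<times> Z" using YS_struct by blast
  then show ?thesis
  proof
    assume "y \<in> G ` CS"
    then obtain p t where c: "(p, t) \<in> CS" "y = G (p, t)" by auto
    then have "p \<in> topspace X" using mem_CS NS_sub by auto
    then show ?thesis using c by (simp add: psi_G ind_eq act_inv)
  next
    assume "y \<in> {None} \<times> Z"
    then show ?thesis using Z_sub act_inv by (auto simp: psi_None)
  qed
qed

lemma psi_zero: "y \<in> YS \<Longrightarrow> psi 0 y = y"
proof -
  assume "y \<in> YS"
  then have "y \<in> G ` CS \<or> y \<in> {None} \<times> Z" using YS_struct by blast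
  then show ?thesis
  proof
    assume "y \<in> G ` CS"
    then obtain p t where c: "(p, t) \<in> CS" "y = G (p, t)" by auto
    then have "p \<in> topspace X" using mem_CS NS_sub by auto
    then show ?thesis using c by (simp add: psi_G ind_eq act_zero)
  next
    assume "y \<in> {None} \<times> Z"
    then show ?thesis using Z_sub act_zero by (auto simp: psi_None)
  qed
qed

lemma psi_add: "y \<in> YS \<Longrightarrow> psi (g + h) y = psi g (psi h y)"
proof -
  assume "y \<in> YS"
  then have "y \<in> G ` CS \<or> y \<in> {None} \<times> Z" using YS_struct by blast
  then show ?thesis
  proof
    assume "y \<in> G ` CS"
    then obtain p t where c: "(p, t) \<in> CS" "y = G (p, t)" by auto
    then have "p \<in> topspace X" using mem_CS NS_sub by auto
    then show ?thesis using c by (simp add: psi_G ind_eq act_add)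
  next
    assume "y \<in> {None} \<times> Z"
    then show ?thesis using Z_sub act_add by (auto simp: psi_None)
  qed
qed

lemma sfun_psi: "y \<in> YS \<Longrightarrow> sfun lam (psi g y) = sfun (lam \<circ> \<phi> g) y"
proof -
  assume "y \<in> YS"
  then have "y \<in> G ` CS \<or> y \<in> {None} \<times> Z" using YS_struct by blast
  then show ?thesis
  proof
    assume "y \<in> G ` CS"
    then obtain p t where c: "y = G (p, t)" by auto
    then show ?thesis by (simp add: psi_def ind_eq sfun_def G_eq)
  next
    assume "y \<in> {None} \<times> Z"
    then show ?thesis by (auto simp: psi_None sfun_def)
  qed
qed

lemma snd_cont_YT: "continuous_map YT X snd"
  unfolding YT_eq PT_def by (rule continuous_map_subtopology_snd)

lemma psi_cont: "continuous_map YT YT (psi g)"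
proof -
  have mu: "continuous_map X euclideanreal (lam \<circ> \<phi> g)"
    by (rule continuous_map_compose[OF cont_act_X lam_cont])
  have s: "continuous_map YT euclideanreal (sfun (lam \<circ> \<phi> g))"
  proof (rule sfun_cont[OF mu])
    show "\<And>p. p \<in> topspace X \<Longrightarrow> 0 \<le> (lam \<circ> \<phi> g) p" using lam_bounds by simp
    show "\<And>p. p \<in> Z \<Longrightarrow> (lam \<circ> \<phi> g) p = 0" using act_Z lam_Z by simp
    show "\<And>p. p \<in> Bd \<Longrightarrow> (lam \<circ> \<phi> g) p = 0" using act_Bd lam_Bd by simp
  qed
  have c1: "continuous_map YT (prod_topology X euclideanreal) (\<lambda>y. (\<phi> g (snd y), sfun (lam \<circ> \<phi> g) y))"
    unfolding continuous_map_pairwise o_def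
    using continuous_map_compose[OF snd_cont_YT cont_act_X] s by (simp add: o_def)
  have eq: "\<And>y. y \<in> topspace YT \<Longrightarrow> Fm (psi g y) = (\<phi> g (snd y), sfun (lam \<circ> \<phi> g) y)"
    using sfun_psi topspace_YT by (auto simp: Fm_def psi_def)
  have c2: "continuous_map YT (prod_topology X euclideanreal) (Fm \<circ> psi g)"
    using c1 by (rule continuous_map_eq) (simp add: eq)
  have "continuous_map YT RT (Fm \<circ> psi g)"
    unfolding RT_def continuous_map_in_subtopology using c2 Fm_in psi_YS topspace_YT by auto
  then have "continuous_map YT YT (Finv \<circ> (Fm \<circ> psi g))"
    using continuous_map_compose Finv_cont by blast
  then show ?thesis
    by (rule continuous_map_eq) (simp add: Finv_Fm psi_YS topspace_YT)
qed

lemma psi_homs: "homeomorphic_maps YT YT (psi g) (psi (- g))"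
  unfolding homeomorphic_maps_def
  using psi_cont psi_inv[of _ g] psi_inv[of _ "-g"] topspace_YT by auto

lemma psi_hom: "homeomorphic_map YT YT (psi g)"
  using psi_homs homeomorphic_map_maps by blast

lemma top_action_YT: "top_action psi YT"
  unfolding top_action_def using psi_hom psi_zero psi_add topspace_YT by auto

lemma topspace_Yp: "topspace YT - {None} \<times> Z = G ` CS"
  using topspace_YT YS_struct by (auto simp: G_eq)

lemma psi_GCS_eq: "psi g ` (G ` CS) = G ` CS"
proof
  show "psi g ` G ` CS \<subseteq> G ` CS" using psi_GCS by blast
  show "G ` CS \<subseteq> psi g ` G ` CS"
  proof
    fix y assume y: "y \<in> G ` CS"
    then have "psi (- g) y \<in> G ` CS" using psi_GCS by blast
    moreover have "psi g (psi (- g) y) = y" using psi_inv[of y "-g"] y YS_struct by auto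
    ultimately show "y \<in> psi g ` G ` CS" by (metis image_eqI)
  qed
qed

lemma top_action_Yp: "top_action psi (subtopology YT (topspace YT - {None} \<times> Z))"
  unfolding top_action_def topspace_Yp
proof (intro conjI allI ballI)
  fix g
  show "homeomorphic_map (subtopology YT (G ` CS)) (subtopology YT (G ` CS)) (psi g)"
    by (rule homeomorphic_map_subtopologies[OF psi_hom]) (use psi_GCS_eq topspace_YT YS_struct in auto)
next
  fix x assume "x \<in> topspace (subtopology YT (G ` CS))"
  then show "psi 0 x = x" using psi_zero topspace_YT by auto
next
  fix g h x assume "x \<in> topspace (subtopology YT (G ` CS))"
  then show "psi (g + h) x = psi g (psi h x)" using psi_add topspace_YT by auto
qed

lemma fpf_Yp: "fixed_point_free_action psi (subtopology YT (topspace YT - {None} \<times> Z))"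
  unfolding fixed_point_free_action_def topspace_Yp
proof (intro allI ballI impI)
  fix g y assume y: "y \<in> topspace (subtopology YT (G ` CS))" and f: "psi g y = y"
  then obtain p t where c: "(p, t) \<in> CS" "y = G (p, t)" by auto
  then have "\<phi> g p = p" using f by (simp add: psi_def ind_eq G_eq)
  moreover have "p \<in> topspace NT" using c mem_CS topspace_NT by auto
  ultimately show "g = 0" using EZ_parts(5) unfolding fixed_point_free_action_def by blast
qed

lemma snd_cont_Yp: "continuous_map (subtopology YT (G ` CS)) NT snd"
proof -
  have "continuous_map (subtopology YT (G ` CS)) X snd"
    by (rule continuous_map_from_subtopology[OF snd_cont_YT])
  moreover have "snd \<in> topspace (subtopology YT (G ` CS)) \<rightarrow> NS"
    using mem_CS by (auto simp: G_eq)
  ultimately show ?thesis unfolding NT_def by (simp add: continuous_map_in_subtopology)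
qed

lemma pd_Yp: "properly_discontinuous_action psi (subtopology YT (topspace YT - {None} \<times> Z))"
  unfolding properly_discontinuous_action_def topspace_Yp
proof (intro allI impI)
  fix K assume K: "compactin (subtopology YT (G ` CS)) K"
  have KG: "K \<subseteq> G ` CS" using compactin_subset_topspace[OF K] by auto
  have "compactin NT (snd ` K)" by (rule image_compactin[OF K snd_cont_Yp])
  then have fin: "finite {g. \<phi> g ` (snd ` K) \<inter> snd ` K \<noteq> {}}"
    using EZ_parts(6) unfolding properly_discontinuous_action_def by blast
  have "{g. psi g ` K \<inter> K \<noteq> {}} \<subseteq> {g. \<phi> g ` (snd ` K) \<inter> snd ` K \<noteq> {}}"
  proof
    fix g assume "g \<in> {g. psi g ` K \<inter> K \<noteq> {}}"
    then obtain y where y: "y \<in> K" "psi g y \<in> K" by blast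
    have "snd (psi g y) = \<phi> g (snd y)" by (simp add: psi_def)
    then have "\<phi> g (snd y) \<in> \<phi> g ` (snd ` K) \<inter> snd ` K" using y by (metis IntI image_eqI)
    then show "g \<in> {g. \<phi> g ` (snd ` K) \<inter> snd ` K \<noteq> {}}" by blast
  qed
  then show "finite {g. psi g ` K \<inter> K \<noteq> {}}" using fin finite_subset by blast
qed

lemma G_cont: "continuous_map CT YT G"
proof -
  have c1: "continuous_map CT (prod_topology X euclideanreal) (\<lambda>c. (fst c, snd c * lam (fst c)))"
    unfolding continuous_map_pairwise o_def
    using fst_cont_CT_X sigma_cont[OF lam_cont lam_Bd] by simp
  have eq: "\<And>c. c \<in> topspace CT \<Longrightarrow> Fm (G c) = (fst c, snd c * lam (fst c))"
    using Fm_G CS_def by simp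
  have c2: "continuous_map CT (prod_topology X euclideanreal) (Fm \<circ> G)"
    using c1 by (rule continuous_map_eq) (simp add: eq)
  have "continuous_map CT RT (Fm \<circ> G)"
    unfolding RT_def continuous_map_in_subtopology using c2 Fm_in YS_struct CS_def by auto
  then have "continuous_map CT YT (Finv \<circ> (Fm \<circ> G))"
    using continuous_map_compose Finv_cont by blast
  then show ?thesis
    by (rule continuous_map_eq) (use Finv_Fm YS_struct CS_def in auto)
qed

lemma cc_Yp: "cocompact_action psi (subtopology YT (topspace YT - {None} \<times> Z))"
  unfolding cocompact_action_def topspace_Yp
proof -
  obtain K0 where K0: "compactin NT K0" "(\<Union>g. \<phi> g ` K0) = topspace NT"
    using EZ_parts(7) unfolding cocompact_action_def by blast
  have K0N: "K0 \<subseteq> NS" using compactin_subset_topspace[OF K0(1)] topspace_NT by simp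
  define K where "K = G ` {c \<in> CS. fst c \<in> K0}"
  have "continuous_map CT (subtopology YT (G ` CS)) G"
    using G_cont CS_def by (simp add: continuous_map_in_subtopology)
  then have Kc: "compactin (subtopology YT (G ` CS)) K"
    unfolding K_def by (rule image_compactin[OF compact_cyl[OF K0(1)]])
  have "(\<Union>g. psi g ` K) = topspace (subtopology YT (G ` CS))"
  proof
    show "(\<Union>g. psi g ` K) \<subseteq> topspace (subtopology YT (G ` CS))"
    proof
      fix y assume "y \<in> (\<Union>g. psi g ` K)"
      then obtain g c where c: "c \<in> CS" "y = psi g (G c)" unfolding K_def by blast
      then have "G c \<in> G ` CS" by blast
      then have "y \<in> G ` CS" using psi_GCS c(2) by blast
      then show "y \<in> topspace (subtopology YT (G ` CS))" using YS_struct topspace_YT by auto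
    qed
    show "topspace (subtopology YT (G ` CS)) \<subseteq> (\<Union>g. psi g ` K)"
    proof
      fix y assume "y \<in> topspace (subtopology YT (G ` CS))"
      then obtain p t where c: "(p, t) \<in> CS" "y = G (p, t)" by auto
      then have pN: "p \<in> NS" and t: "0 \<le> t" "t \<le> 1" "p \<in> Bd \<longrightarrow> t = 0" using mem_CS by auto
      have "p \<in> (\<Union>g. \<phi> g ` K0)" using K0(2) topspace_NT pN by simp
      then obtain g q where q: "q \<in> K0" "p = \<phi> g q" by blast
      have qN: "q \<in> NS" using q K0N by blast
      have "q \<in> Bd \<longleftrightarrow> p \<in> Bd" using act_Bd_iff[OF qN] q by simp
      then have c': "(q, t) \<in> CS" using qN t by (simp add: mem_CS)
      then have "G (q, t) \<in> K" unfolding K_def using q by auto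
      moreover have "psi g (G (q, t)) = y" using c q by (simp add: psi_G ind_eq)
      ultimately show "y \<in> (\<Union>g. psi g ` K)" by blast
    qed
  qed
  then show "\<exists>K. compactin (subtopology YT (G ` CS)) K \<and> (\<Union>g. psi g ` K) = topspace (subtopology YT (G ` CS))"
    using Kc by blast
qed

end


lemma pd_le:
  assumes "0 \<le> dd a a'"
  shows "prod_dist dd dist (a, b) (a', b') \<le> dd a a' + \<bar>b - b'\<bar>"
proof -
  have "sqrt ((dd a a')\<^sup>2 + (dist b b')\<^sup>2) \<le> dd a a' + dist b b'"
    using assms by (intro sqrt_sum_squares_le_sum) auto
  then show ?thesis by (simp add: prod_dist_def dist_real_def)
qed

context ezctx begin

lemma X_nonempty: "topspace X \<noteq> {}"
proof -
  have "euclidean_retract X" using EZ unfolding EZ_structure_via_def Z_structure_via_def by blast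
  then obtain n S where S: "S retract_of_space Euclidean_space n" "X homeomorphic_space subtopology (Euclidean_space n) S"
    unfolding euclidean_retract_def by blast
  obtain r where r: "continuous_map (Euclidean_space n) (subtopology (Euclidean_space n) S) r"
    using S(1) unfolding retract_of_space_def by blast
  have "(\<lambda>i. 0::real) \<in> topspace (Euclidean_space n)" by (simp add: topspace_Euclidean_space)
  then have "r (\<lambda>i. 0) \<in> topspace (subtopology (Euclidean_space n) S)"
    using continuous_map_image_subset_topspace[OF r] by blast
  then have ne: "topspace (subtopology (Euclidean_space n) S) \<noteq> {}" by blast
  obtain f g where "homeomorphic_maps X (subtopology (Euclidean_space n) S) f g"
    using S(2) unfolding homeomorphic_space_def by blast
  then have "g ` topspace (subtopology (Euclidean_space n) S) \<subseteq> topspace X"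
    unfolding homeomorphic_maps_def continuous_map_def by blast
  then show ?thesis using ne by blast
qed

lemma NS_nonempty: "NS \<noteq> {}"
  using NS_dense[of "topspace X"] X_nonempty by blast

lemma YS_nonempty: "YS \<noteq> {}"
proof -
  obtain p where "p \<in> NS" using NS_nonempty by blast
  then have "(p, 0) \<in> CS" by (simp add: mem_CS)
  then show ?thesis using YS_struct by blast
qed

lemma sfun_nonneg: "y \<in> YS \<Longrightarrow> 0 \<le> sfun lam y"
proof -
  assume "y \<in> YS"
  then have "y \<in> G ` CS \<or> y \<in> {None} \<times> Z" using YS_struct by blast
  then show ?thesis
  proof
    assume "y \<in> G ` CS"
    then obtain c where c: "c \<in> CS" "y = G c" by blast
    then show ?thesis using mem_CS lam_bounds by (simp add: sfun_def G_eq)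
  next
    assume "y \<in> {None} \<times> Z" then show ?thesis by (auto simp: sfun_def)
  qed
qed

lemma sfun_le: "y \<in> YS \<Longrightarrow> sfun lam y \<le> lam (snd y)"
  using sfun_bound[of y lam] lam_bounds by auto

lemma closed_Zp: "closedin YT ({None} \<times> Z)"
proof -
  have "openin OT (Some ` CS)" unfolding OT_def CS_def by (rule openin_opc_Some) simp
  then have "closedin OT (topspace OT - Some ` CS)" by (simp add: closedin_diff)
  moreover have "topspace OT - Some ` CS = {None}" by (auto simp: topspace_OT)
  ultimately have "closedin OT {None}" by simp
  then have "closedin PT ({None} \<times> topspace X)" unfolding PT_def by (simp add: closedin_prod_Times_iff)
  then have "closedin YT (YS \<inter> ({None} \<times> topspace X))" unfolding YT_eq
    by (rule closedin_subtopology_Int_closed)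
  moreover have "YS \<inter> ({None} \<times> topspace X) = {None} \<times> Z" using YS_struct Z_sub by (auto simp: G_eq)
  ultimately show ?thesis by simp
qed

lemma Z_set_YT: "Z_set YT ({None} \<times> Z)"
  unfolding Z_set_def
proof (intro conjI exI[of _ mY] allI impI)
  show "closedin YT ({None} \<times> Z)" by (rule closed_Zp)
  show "mtopology_of mY = YT" by (rule mY_props(1))
  fix e :: real assume e: "e > 0"
  have e2: "e/2 > 0" using e by simp
  obtain fX where fX: "continuous_map X X fX" "\<forall>x\<in>topspace X. fX x \<notin> Z \<and> mdist mX (fX x) x < e/2"
    using mX_props(2) e2 by blast
  define h where "h y = (fX (snd y), min (sfun lam y) (lam (fX (snd y))))" for y
  have fXX: "\<And>x. x \<in> topspace X \<Longrightarrow> fX x \<in> topspace X"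
    using continuous_map_image_subset_topspace[OF fX(1)] by blast
  have snd_YS: "\<And>y. y \<in> YS \<Longrightarrow> snd y \<in> topspace X" using YS_struct mem_CS NS_sub Z_sub by (auto simp: G_eq)
  have hR: "\<And>y. y \<in> YS \<Longrightarrow> h y \<in> Rset"
    unfolding h_def Rset_def using sfun_nonneg lam_bounds fXX snd_YS by auto
  have c1: "continuous_map YT X (\<lambda>y. fX (snd y))"
    using continuous_map_compose[OF snd_cont_YT fX(1)] by (simp add: o_def)
  have c2: "continuous_map YT euclideanreal (\<lambda>y. min (sfun lam y) (lam (fX (snd y))))"
  proof (rule continuous_map_real_min)
    show "continuous_map YT euclideanreal (sfun lam)"
      by (rule sfun_cont[OF lam_cont lam_bounds(1) lam_Z lam_Bd])
    show "continuous_map YT euclideanreal (\<lambda>y. lam (fX (snd y)))"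
      using continuous_map_compose[OF c1 lam_cont] by (simp add: o_def)
  qed
  have "continuous_map YT (prod_topology X euclideanreal) h"
    unfolding continuous_map_pairwise h_def o_def using c1 c2 by simp
  then have "continuous_map YT RT h"
    unfolding RT_def continuous_map_in_subtopology using hR topspace_YT by auto
  then have cf: "continuous_map YT YT (Finv \<circ> h)"
    using continuous_map_compose Finv_cont by blast
  show "\<exists>f. continuous_map YT YT f \<and> (\<forall>x\<in>topspace YT. f x \<notin> {None} \<times> Z \<and> mdist mY (f x) x < e)"
  proof (intro exI conjI ballI)
    show "continuous_map YT YT (Finv \<circ> h)" by (rule cf)
    fix y assume "y \<in> topspace YT"
    then have y: "y \<in> YS" using topspace_YT by simp
    have pX: "snd y \<in> topspace X" using snd_YS[OF y] .
    have nz: "fX (snd y) \<notin> Z" using fX(2) pX by blast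
    show "(Finv \<circ> h) y \<notin> {None} \<times> Z"
      using nz unfolding h_def Finv_def by simp
    have FF: "Fm ((Finv \<circ> h) y) = h y" using Finv_in[OF hR[OF y]] by simp
    have Fy: "Fm y = (snd y, sfun lam y)" by (simp add: Fm_def)
    let ?q = "fX (snd y)" and ?p = "snd y" and ?s = "sfun lam y"
    have dq: "mdist mX ?q ?p < e/2" using fX(2) pX by blast
    have sle: "?s \<le> lam ?p" using sfun_le[OF y] .
    have "\<bar>min ?s (lam ?q) - ?s\<bar> \<le> \<bar>lam ?p - lam ?q\<bar>"
    proof (cases "?s \<le> lam ?q")
      case True
      then show ?thesis by simp
    next
      case False
      then have "min ?s (lam ?q) = lam ?q" by simp
      then show ?thesis using sle False by arith
    qed
    also have "\<dots> \<le> mdist mX ?p ?q" using lam_lip pX fXX[OF pX] by blast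
    also have "\<dots> = mdist mX ?q ?p" by (simp add: mdist_commute)
    finally have m: "\<bar>min ?s (lam ?q) - ?s\<bar> \<le> mdist mX ?q ?p" .
    have "mdist mY ((Finv \<circ> h) y) y = prod_dist (mdist mX) dist (h y) (Fm y)"
      using mY_props(3) FF by simp
    also have "\<dots> = prod_dist (mdist mX) dist (?q, min ?s (lam ?q)) (?p, ?s)"
      by (simp add: h_def Fy)
    also have "\<dots> \<le> mdist mX ?q ?p + \<bar>min ?s (lam ?q) - ?s\<bar>" by (rule pd_le) simp
    also have "\<dots> < e" using dq m by simp
    finally show "mdist mY ((Finv \<circ> h) y) y < e" .
  qed
qed

end


context ezctx begin

lemma mball_X_open: "openin X (mball_of mX c r)"
proof -
  have "openin (mtopology_of mX) (mball_of mX c r)"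
    unfolding mtopology_of_def mball_of_def
    by (rule Metric_space.openin_mball[OF Metric_space_mspace_mdist])
  then show ?thesis using mX_props(1) by simp
qed

lemma null_YT: "null_translates psi YT ({None} \<times> Z)"
  unfolding null_translates_def topspace_Yp
proof (intro allI impI)
  fix K \<U>
  assume K: "compactin (subtopology YT (G ` CS)) K"
    and U: "(\<forall>U\<in>\<U>. openin YT U) \<and> topspace YT \<subseteq> \<Union>\<U>"
  have KG: "K \<subseteq> G ` CS" using compactin_subset_topspace[OF K] by auto
  have UmY: "\<forall>U\<in>\<U>. openin (mtopology_of mY) U" using U mY_props(1) by simp
  have covmY: "mspace mY \<subseteq> \<Union>\<U>" using U mY_props(2) topspace_YT by simp
  obtain d where d: "d > 0" "\<forall>x\<in>mspace mY. \<exists>U\<in>\<U>. mball_of mY x d \<subseteq> U"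
    using Lebesgue_number[of mY \<U>] compact_YT mY_props(1) UmY covmY by auto
  define K' where "K' = snd ` K"
  have K'c: "compactin NT K'" unfolding K'_def by (rule image_compactin[OF K snd_cont_Yp])
  define L where "L = {p \<in> topspace X. lam p \<in> {d/4..}}"
  have Lcl: "closedin X L" unfolding L_def
    by (rule closedin_continuous_map_preimage[OF lam_cont]) simp
  have LN: "L \<subseteq> NS"
  proof
    fix p assume "p \<in> L"
    then have "p \<in> topspace X" "lam p \<ge> d/4" unfolding L_def by auto
    then show "p \<in> NS" using lam_Z d(1) NS_def by force
  qed
  have Lc: "compactin NT L" unfolding NT_def compactin_subtopology
    using closedin_compact_space[OF EZ_parts(1) Lcl] LN by simp
  have KLc: "compactin NT (K' \<union> L)" using K'c Lc by (rule compactin_Un)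
  have fin1: "finite {g. \<phi> g ` (K' \<union> L) \<inter> (K' \<union> L) \<noteq> {}}"
    using EZ_parts(6) KLc unfolding properly_discontinuous_action_def by blast
  define \<V> where "\<V> = (\<lambda>c. mball_of mX c (d/4)) ` topspace X"
  have Vo: "\<forall>V\<in>\<V>. openin X V" unfolding \<V>_def using mball_X_open by blast
  have Vc: "topspace X \<subseteq> \<Union>\<V>"
  proof
    fix x assume x: "x \<in> topspace X"
    then have "x \<in> mball_of mX x (d/4)" using d(1) mspace_mX by simp
    then show "x \<in> \<Union>\<V>" unfolding \<V>_def using x by blast
  qed
  have K'c2: "compactin (subtopology X (topspace X - Z)) K'" using K'c unfolding NT_def NS_def .
  have fin2: "finite {g. \<not> (\<exists>V\<in>\<V>. \<phi> g ` K' \<subseteq> V)}"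
    using EZ_parts(8) K'c2 Vo Vc unfolding null_translates_def by blast
  have sub: "{g. \<not> (\<exists>U\<in>\<U>. psi g ` K \<subseteq> U)} \<subseteq>
        {g. \<phi> g ` (K' \<union> L) \<inter> (K' \<union> L) \<noteq> {}} \<union> {g. \<not> (\<exists>V\<in>\<V>. \<phi> g ` K' \<subseteq> V)}"
  proof
    fix g assume g: "g \<in> {g. \<not> (\<exists>U\<in>\<U>. psi g ` K \<subseteq> U)}"
    show "g \<in> {g. \<phi> g ` (K' \<union> L) \<inter> (K' \<union> L) \<noteq> {}} \<union> {g. \<not> (\<exists>V\<in>\<V>. \<phi> g ` K' \<subseteq> V)}"
    proof (rule ccontr)
      assume "\<not> ?thesis"
      then have n1: "\<phi> g ` (K' \<union> L) \<inter> (K' \<union> L) = {}" and n2: "\<exists>V\<in>\<V>. \<phi> g ` K' \<subseteq> V" by auto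
      obtain c where c: "c \<in> topspace X" "\<phi> g ` K' \<subseteq> mball_of mX c (d/4)" using n2 unfolding \<V>_def by blast
      have lsmall: "lam (\<phi> g p) < d/4" if "p \<in> K'" for p
      proof (rule ccontr)
        assume "\<not> lam (\<phi> g p) < d/4"
        moreover have "p \<in> topspace X" using that K'c compactin_subset_topspace topspace_NT NS_sub by blast
        ultimately have "\<phi> g p \<in> L" unfolding L_def using act_X by auto
        then have "\<phi> g p \<in> \<phi> g ` (K' \<union> L) \<inter> (K' \<union> L)" using that by blast
        then show False using n1 by blast
      qed
      show False
      proof (cases "K = {}")
        case True
        obtain y0 where "y0 \<in> YS" using YS_nonempty by blast
        then obtain U where U: "U \<in> \<U>" using d(2) mY_props(2) by blast
        have "psi g ` K \<subseteq> U" using True by simp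
        then show False using g U by blast
      next
        case False
        then obtain y0 where y0: "y0 \<in> K" by blast
        have psiK: "\<And>y. y \<in> K \<Longrightarrow> psi g y \<in> YS" using KG psi_GCS YS_struct by blast
        have Fps: "\<And>y. y \<in> K \<Longrightarrow> fst (Fm (psi g y)) = \<phi> g (snd y)"
          by (simp add: Fm_def psi_def)
        have sps: "\<And>y. y \<in> K \<Longrightarrow> 0 \<le> snd (Fm (psi g y)) \<and> snd (Fm (psi g y)) < d/4"
        proof -
          fix y assume y: "y \<in> K"
          have "0 \<le> sfun lam (psi g y)" using sfun_nonneg psiK y by blast
          moreover have "sfun lam (psi g y) \<le> lam (snd (psi g y))" using sfun_le psiK y by blast
          moreover have "snd (psi g y) = \<phi> g (snd y)" by (simp add: psi_def)
          moreover have "lam (\<phi> g (snd y)) < d/4" using lsmall y K'_def by blast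
          ultimately show "0 \<le> snd (Fm (psi g y)) \<and> snd (Fm (psi g y)) < d/4" by (simp add: Fm_def)
        qed
        have inball: "\<And>y. y \<in> K \<Longrightarrow> \<phi> g (snd y) \<in> mball_of mX c (d/4)" using c K'_def by blast
        have "psi g ` K \<subseteq> mball_of mY (psi g y0) d"
        proof
          fix z assume "z \<in> psi g ` K"
          then obtain y where y: "y \<in> K" "z = psi g y" by blast
          have a: "mdist mX (\<phi> g (snd y0)) (\<phi> g (snd y)) < d/2"
          proof -
            have "mdist mX (\<phi> g (snd y0)) (\<phi> g (snd y)) \<le> mdist mX (\<phi> g (snd y0)) c + mdist mX c (\<phi> g (snd y))"
              using inball[OF y0] inball[OF y(1)] by (auto intro: mdist_triangle)
            moreover have "mdist mX (\<phi> g (snd y0)) c < d/4" using inball[OF y0] by (simp add: mdist_commute)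
            moreover have "mdist mX c (\<phi> g (snd y)) < d/4" using inball[OF y(1)] by simp
            ultimately show ?thesis by simp
          qed
          have b: "\<bar>snd (Fm (psi g y0)) - snd (Fm (psi g y))\<bar> < d/4" using sps[OF y0] sps[OF y(1)] by arith
          have "mdist mY (psi g y0) z = prod_dist (mdist mX) dist (Fm (psi g y0)) (Fm (psi g y))"
            using mY_props(3) y by simp
          also have "\<dots> = prod_dist (mdist mX) dist (fst (Fm (psi g y0)), snd (Fm (psi g y0))) (fst (Fm (psi g y)), snd (Fm (psi g y)))"
            by simp
          also have "\<dots> \<le> mdist mX (fst (Fm (psi g y0))) (fst (Fm (psi g y))) + \<bar>snd (Fm (psi g y0)) - snd (Fm (psi g y))\<bar>"
            by (rule pd_le) simp
          also have "\<dots> < d" using a b d(1) unfolding Fps[OF y0] Fps[OF y(1)] by linarith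
          finally show "z \<in> mball_of mY (psi g y0) d"
            using psiK y0 psiK[OF y(1)] y mY_props(2) by simp
        qed
        moreover obtain U where "U \<in> \<U>" "mball_of mY (psi g y0) d \<subseteq> U"
          using d(2) psiK[OF y0] mY_props(2) by blast
        ultimately show False using g by blast
      qed
    qed
  qed
  show "finite {g. \<not> (\<exists>U\<in>\<U>. psi g ` K \<subseteq> U)}"
    using finite_subset[OF sub] fin1 fin2 by blast
qed

end


lemma cont_into_Euclidean:
  assumes "\<And>i. continuous_map T euclideanreal (\<lambda>z. f z i)" "\<And>z. z \<in> topspace T \<Longrightarrow> f z \<in> topspace (Euclidean_space k)"
  shows "continuous_map T (Euclidean_space k) f"
  unfolding Euclidean_space_def continuous_map_in_subtopology
proof
  show "continuous_map T (powertop_real UNIV) f"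
    unfolding continuous_map_componentwise_UNIV using assms(1) by blast
  show "f \<in> topspace T \<rightarrow> {x. \<forall>i\<ge>k. x i = 0}" using assms(2) by (auto simp: topspace_Euclidean_space)
qed

lemma trunc_cont: "continuous_map (Euclidean_space (Suc n)) (Euclidean_space n) (\<lambda>x. x(n := 0))"
proof (rule cont_into_Euclidean)
  fix i
  show "continuous_map (Euclidean_space (Suc n)) euclideanreal (\<lambda>z. (z(n := 0)) i)"
    by (cases "i = n") (simp_all add: continuous_map_Euclidean_coord)
next
  fix z assume "z \<in> topspace (Euclidean_space (Suc n))"
  then show "z(n := 0) \<in> topspace (Euclidean_space n)"
    by (auto simp: topspace_Euclidean_space)
qed

lemma ext_cont:
  assumes f: "continuous_map T (Euclidean_space n) f" and g: "continuous_map T euclideanreal g"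
  shows "continuous_map T (Euclidean_space (Suc n)) (\<lambda>z. (f z)(n := g z))"
proof (rule cont_into_Euclidean)
  fix i
  show "continuous_map T euclideanreal (\<lambda>z. ((f z)(n := g z)) i)"
  proof (cases "i = n")
    case True then show ?thesis using g by simp
  next
    case False then show ?thesis
      using continuous_map_compose[OF f continuous_map_Euclidean_coord[of n i]] by (simp add: o_def)
  qed
next
  fix z assume "z \<in> topspace T"
  then have "f z \<in> topspace (Euclidean_space n)" using continuous_map_image_subset_topspace[OF f] by blast
  then show "(f z)(n := g z) \<in> topspace (Euclidean_space (Suc n))"
    by (auto simp: topspace_Euclidean_space)
qed

context ezctx begin

lemma ER_YT: "euclidean_retract YT"
proof -
  have "euclidean_retract X" using EZ unfolding EZ_structure_via_def Z_structure_via_def by blast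
  then obtain n S where S: "S retract_of_space Euclidean_space n" "X homeomorphic_space subtopology (Euclidean_space n) S"
    unfolding euclidean_retract_def by blast
  obtain r where r: "continuous_map (Euclidean_space n) (subtopology (Euclidean_space n) S) r" "\<And>x. x \<in> S \<Longrightarrow> r x = x"
    and SE: "S \<subseteq> topspace (Euclidean_space n)"
    using S(1) unfolding retract_of_space_def by blast
  obtain hX hXi where hh: "homeomorphic_maps X (subtopology (Euclidean_space n) S) hX hXi"
    using S(2) unfolding homeomorphic_space_def by blast
  have hX_c: "continuous_map X (subtopology (Euclidean_space n) S) hX"
    and hXi_c: "continuous_map (subtopology (Euclidean_space n) S) X hXi"
    and hXi_hX: "\<And>p. p \<in> topspace X \<Longrightarrow> hXi (hX p) = p"
    and hX_hXi: "\<And>x. x \<in> topspace (subtopology (Euclidean_space n) S) \<Longrightarrow> hX (hXi x) = x"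
    using hh unfolding homeomorphic_maps_def by auto
  have hXS: "\<And>p. p \<in> topspace X \<Longrightarrow> hX p \<in> S"
    using continuous_map_image_subset_topspace[OF hX_c] by auto
  have hXn: "\<And>p. p \<in> topspace X \<Longrightarrow> hX p n = 0"
    using hXS SE by (auto simp: topspace_Euclidean_space)
  have hXiX: "\<And>x. x \<in> S \<Longrightarrow> hXi x \<in> topspace X"
    using continuous_map_image_subset_topspace[OF hXi_c] SE by auto
  have hX_cE: "continuous_map X (Euclidean_space n) hX"
    using hX_c continuous_map_in_subtopology by blast
  define emb where "emb z = (hX (fst z))(n := snd z)" for z :: "'a \<times> real"
  define einv where "einv x = (hXi (x(n := 0)), x n)" for x :: "nat \<Rightarrow> real"
  define R' where "R' = emb ` Rset"
  define E1 where "E1 = Euclidean_space (Suc n)"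
  have RX: "\<And>z. z \<in> Rset \<Longrightarrow> fst z \<in> topspace X" by (simp add: Rset_def)
  have einv_emb: "\<And>z. z \<in> Rset \<Longrightarrow> einv (emb z) = z"
  proof -
    fix z assume z: "z \<in> Rset"
    have "(hX (fst z))(n := snd z, n := 0) = hX (fst z)" using hXn[OF RX[OF z]] by (auto simp: fun_eq_iff)
    then show "einv (emb z) = z" using hXi_hX[OF RX[OF z]] by (simp add: einv_def emb_def)
  qed
  have emb_cont: "continuous_map RT E1 emb"
    unfolding E1_def emb_def
  proof (rule ext_cont)
    show "continuous_map RT (Euclidean_space n) (\<lambda>z. hX (fst z))"
      using continuous_map_compose[OF _ hX_cE, of RT fst] unfolding RT_def o_def
      by (simp add: continuous_map_subtopology_fst)
    show "continuous_map RT euclideanreal snd"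
      unfolding RT_def by (rule continuous_map_subtopology_snd)
  qed
  have trunc_S: "\<And>x. x \<in> R' \<Longrightarrow> x(n := 0) \<in> S"
  proof -
    fix x assume "x \<in> R'"
    then obtain z where z: "z \<in> Rset" "x = emb z" unfolding R'_def by blast
    have "x(n := 0) = hX (fst z)" using z hXn[OF RX[OF z(1)]] by (auto simp: emb_def fun_eq_iff)
    then show "x(n := 0) \<in> S" using hXS RX z by simp
  qed
  have einv_cont: "continuous_map (subtopology E1 R') RT einv"
  proof -
    have t1: "continuous_map (subtopology E1 R') (subtopology (Euclidean_space n) S) (\<lambda>x. x(n := 0))"
      unfolding E1_def continuous_map_in_subtopology
      using continuous_map_from_subtopology[OF trunc_cont] trunc_S by auto
    have c1: "continuous_map (subtopology E1 R') X (\<lambda>x. hXi (x(n := 0)))"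
      using continuous_map_compose[OF t1 hXi_c] by (simp add: o_def)
    have c2: "continuous_map (subtopology E1 R') euclideanreal (\<lambda>x. x n)"
      unfolding E1_def by (rule continuous_map_from_subtopology[OF continuous_map_Euclidean_coord])
    have "continuous_map (subtopology E1 R') (prod_topology X euclideanreal) einv"
      unfolding continuous_map_pairwise einv_def o_def using c1 c2 by simp
    moreover have "einv \<in> topspace (subtopology E1 R') \<rightarrow> Rset"
      using einv_emb unfolding R'_def by auto
    ultimately show ?thesis unfolding RT_def by (simp add: continuous_map_in_subtopology)
  qed
  have homs: "homeomorphic_maps RT (subtopology E1 R') emb einv"
    unfolding homeomorphic_maps_def
  proof (intro conjI)
    show "continuous_map RT (subtopology E1 R') emb"
      using emb_cont unfolding continuous_map_in_subtopology R'_def topspace_RT by auto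
    show "continuous_map (subtopology E1 R') RT einv" by (rule einv_cont)
    show "\<forall>x\<in>topspace RT. einv (emb x) = x" using einv_emb topspace_RT by simp
    show "\<forall>y\<in>topspace (subtopology E1 R'). emb (einv y) = y"
      using einv_emb unfolding R'_def by auto
  qed
  have retr: "R' retract_of_space E1"
    unfolding retract_of_space_def
  proof (intro conjI exI)
    show "R' \<subseteq> topspace E1"
      using continuous_map_image_subset_topspace[OF emb_cont] topspace_RT unfolding R'_def by simp
    define q where "q x = hXi (r (x(n := 0)))" for x
    define rho where "rho x = emb (q x, max 0 (min (x n) (lam (q x))))" for x
    have tr: "continuous_map E1 (Euclidean_space n) (\<lambda>x. x(n := 0))" unfolding E1_def by (rule trunc_cont)
    have qc: "continuous_map E1 X q"
      unfolding q_def[abs_def] using continuous_map_compose[OF continuous_map_compose[OF tr r(1)] hXi_c] by (simp add: o_def)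
    have c2: "continuous_map E1 euclideanreal (\<lambda>x. max 0 (min (x n) (lam (q x))))"
    proof (intro continuous_map_real_max continuous_map_real_min)
      show "continuous_map E1 euclideanreal (\<lambda>x. 0)" by simp
      show "continuous_map E1 euclideanreal (\<lambda>x. x n)" unfolding E1_def by (rule continuous_map_Euclidean_coord)
      show "continuous_map E1 euclideanreal (\<lambda>x. lam (q x))"
        using continuous_map_compose[OF qc lam_cont] by (simp add: o_def)
    qed
    have inR: "\<And>x. x \<in> topspace E1 \<Longrightarrow> (q x, max 0 (min (x n) (lam (q x)))) \<in> Rset"
      using continuous_map_image_subset_topspace[OF qc] lam_bounds by (auto simp: Rset_def)
    have "continuous_map E1 (prod_topology X euclideanreal) (\<lambda>x. (q x, max 0 (min (x n) (lam (q x)))))"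
      unfolding continuous_map_pairwise o_def using qc c2 by simp
    then have "continuous_map E1 RT (\<lambda>x. (q x, max 0 (min (x n) (lam (q x)))))"
      unfolding RT_def continuous_map_in_subtopology using inR by auto
    then have "continuous_map E1 (subtopology E1 R') (emb \<circ> (\<lambda>x. (q x, max 0 (min (x n) (lam (q x))))))"
      using continuous_map_compose homs unfolding homeomorphic_maps_def by blast
    then show "continuous_map E1 (subtopology E1 R') rho" unfolding rho_def[abs_def] by (simp add: o_def)
    show "\<forall>x\<in>R'. rho x = x"
    proof
      fix x assume x: "x \<in> R'"
      then obtain z where z: "z \<in> Rset" "x = emb z" unfolding R'_def by blast
      have xt: "x(n := 0) = hX (fst z)" using z hXn[OF RX[OF z(1)]] by (auto simp: emb_def fun_eq_iff)
      have "q x = fst z" unfolding q_def xt using r(2)[OF hXS[OF RX[OF z(1)]]] hXi_hX[OF RX[OF z(1)]] by simp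
      moreover have "x n = snd z" using z by (simp add: emb_def)
      moreover have "0 \<le> snd z" "snd z \<le> lam (fst z)" using z by (auto simp: Rset_def)
      ultimately have "(q x, max 0 (min (x n) (lam (q x)))) = z" by (cases z) simp
      then show "rho x = x" using z by (simp add: rho_def)
    qed
  qed
  have "YT homeomorphic_space RT" using Fm_homs homeomorphic_maps_imp_homeomorphic_space by blast
  also have "RT homeomorphic_space subtopology E1 R'" using homs homeomorphic_maps_imp_homeomorphic_space by blast
  finally have hs: "YT homeomorphic_space subtopology (Euclidean_space (Suc n)) R'" unfolding E1_def .
  have met: "metrizable_space YT"
    using Metric_space.metrizable_space_mtopology[OF Metric_space_mspace_mdist[of mY]] mY_props(1)
    unfolding mtopology_of_def by simp
  show ?thesis unfolding euclidean_retract_def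
    using compact_YT met hs retr unfolding E1_def by blast
qed

end


context ezctx begin

lemma main_loc:
  "compactified_carrier X Z - graph_embedding ` topspace (mapping_cyl (subtopology X (topspace X - Z)))
           = {None} \<times> Z
       \<and> (\<exists>\<psi>. EZ_structure_via \<psi> (compactified_space X Z)
                 (compactified_carrier X Z - graph_embedding ` topspace (mapping_cyl (subtopology X (topspace X - Z))))
             \<and> (\<forall>g. \<forall>x\<in>topspace (mapping_cyl (subtopology X (topspace X - Z))).
                   \<psi> g (graph_embedding x) = graph_embedding (induced_action \<phi> g x)))"
proof -
  have e1: "compactified_carrier X Z = YS" by (simp add: YS_def)
  have e2: "compactified_space X Z = YT" by (simp add: YT_def)
  have e3: "topspace (mapping_cyl (subtopology X (topspace X - Z))) = CS"
    by (simp add: CS_def CT_def NT_def NS_def)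
  have eq: "compactified_carrier X Z - graph_embedding ` topspace (mapping_cyl (subtopology X (topspace X - Z)))
           = {None} \<times> Z" unfolding e1 e3 by (rule first_conj)
  have "EZ_structure_via psi YT ({None} \<times> Z)"
    unfolding EZ_structure_via_def Z_structure_via_def
    using ER_YT Z_set_YT top_action_Yp fpf_Yp pd_Yp cc_Yp null_YT top_action_YT by blast
  moreover have "\<forall>g. \<forall>x\<in>CS. psi g (graph_embedding x) = graph_embedding (induced_action \<phi> g x)"
    by (simp add: psi_G)
  moreover have eq': "compactified_carrier X Z - graph_embedding ` CS = {None} \<times> Z"
    using first_conj e1 by simp
  ultimately show ?thesis unfolding e2 e3 unfolding eq' by blast
qed

end

theorem lemma2p3:
  fixes X :: "'a topology" and Z :: "'a set" and \<phi> :: "'g::group_add \<Rightarrow> 'a \<Rightarrow> 'a"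
  assumes EZ: "EZ_structure_via \<phi> X Z"
    and mfd: "is_manifold (subtopology X (topspace X - Z))"
  shows "compactified_carrier X Z - graph_embedding ` topspace (mapping_cyl (subtopology X (topspace X - Z)))
           = {None} \<times> Z
       \<and> (\<exists>\<psi>. EZ_structure_via \<psi> (compactified_space X Z)
                 (compactified_carrier X Z - graph_embedding ` topspace (mapping_cyl (subtopology X (topspace X - Z))))
             \<and> (\<forall>g. \<forall>x\<in>topspace (mapping_cyl (subtopology X (topspace X - Z))).
                   \<psi> g (graph_embedding x) = graph_embedding (induced_action \<phi> g x)))"
proof -
  interpret ezctx X Z \<phi> using EZ mfd by (rule ezctx.intro)
  show ?thesis by (rule main_loc)
qed


end
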